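(* $\mathrm{HS}_{\mathsf{st}}\not\geq\mathrm{HS}_{\mathsf{lin}}$ and $\mathrm{HS}_{\mathsf{ct}}\not\geq\mathrm{HS}_{\mathsf{lin}}$: there is an $\mathrm{HS}$ formula $\psi$ such that no $\mathrm{HS}$ formula $\varphi$ satisfies, for every finite Kripke structure $K$, $K\models_{\mathsf{st}}\varphi$ iff $K\models_{\mathsf{lin}}\psi$; and there is an $\mathrm{HS}$ formula $\psi'$ such that no $\mathrm{HS}$ formula $\varphi$ satisfies, for every finite Kripke structure $K$, $K\models_{\mathsf{ct}}\varphi$ iff $K\models_{\mathsf{lin}}\psi'$.
   Context: A Kripke structure over a finite set $\mathcal{AP}$ is $K=(\mathcal{AP},S,\delta,\mu,s_0)$ with states $S$, left-total $\delta\subseteq S\times S$, labelling $\mu:S\to2^{\mathcal{AP}}$, initial state $s_0$; finite if $S$ is finite. Infinite paths are infinite state sequences following $\delta$; traces are their non-empty finite prefixes; initial means starting at $s_0$. For a finite word $w=w(0)\cdots w(n)$, $\mathrm{Pref}(w)=\{w[0,i]\mid0\le i\le n-1\}$, $\mathrm{Suff}(w)=\{w[i,n]\mid1\le i\le n\}$. The computation tree $C(K)$ has as states the initial traces of $K$, initial state $s_0$, labelling $\rho\mapsto\mu(\text{last state of }\rho)$, transitions $(\rho,\rho\cdot s)$. $\mathrm{HS}$ formulas: $\psi::=p\mid\neg\psi\mid\psi\wedge\psi\mid\langle X\rangle\psi$ for the Allen relations $A,L,B,E,D,O$ and inverses; all definable (non-strict semantics) from $\langle B\rangle,\langle E\rangle,\langle\bar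 B\rangle,\langle\bar E\rangle$. State-based semantics over traces: $\rho\models p$ iff $p\in\mu(s)$ for every state $s$ of $\rho$; $\langle B\rangle\psi$: some $\rho'\in\mathrm{Pref}(\rho)$ satisfies $\psi$; $\langle E\rangle\psi$: some $\rho'\in\mathrm{Suff}(\rho)$; $\langle\bar B\rangle\psi$: some trace $\rho'$ with $\rho\in\mathrm{Pref}(\rho')$; $\langle\bar E\rangle\psi$: some trace $\rho'$ with $\rho\in\mathrm{Suff}(\rho')$. $K\models_{\mathsf{st}}\psi$ iff every initial trace satisfies $\psi$; $K\models_{\mathsf{ct}}\psi$ iff $C(K)\models_{\mathsf{st}}\psi$. Trace-based: for an infinite path $\pi$, intervals $[i,j]$, $0\le i\le j$; $[i,j]\models p$ iff $p\in\mu(\pi(h))$ for all $i\le h\le j$; $[x,y]\models\langle B\rangle\psi$ iff $[x,z]\models\psi$ for some $x\le z<y$; $\langle E\rangle$: $[v,y]$ for some $x<v\le y$; $\langle\bar B\rangle$: $[x,z]$ for some $z>y$; $\langle\bar E\rangle$: $[v,y]$ for some $v<x$. $K\models_{\mathsf{lin}}\psi$ iff for every initial infinite path $\pi$ and $i\ge0$, $[0,i]\models\psi$ in $\pi$. *)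

theory Defs
  imports Main
begin

text \<open>Kripke structures over the finite set of proposition letters UNIV :: 'ap set
  ('ap of class finite). States of type 's; the state set S is explicit.\<close>

record ('s, 'ap) kripke =
  states :: "'s set"
  trans  :: "('s \<times> 's) set"
  label  :: "'s \<Rightarrow> 'ap set"
  init   :: 's

definition kripke :: "('s, 'ap) kripke \<Rightarrow> bool" where
  "kripke K \<longleftrightarrow> trans K \<subseteq> states K \<times> states K
     \<and> (\<forall>s\<in>states K. \<exists>t. (s, t) \<in> trans K)
     \<and> init K \<in> states K"

text \<open>HS formulas; all Allen modalities are definable (non-strict semantics) from
  B, E, Bbar, Ebar, so these are taken as primitives.\<close>

datatype 'ap hs =
    Prop 'ap
  | Neg "'ap hs"
  | Conj "'ap hs" "'ap hs"
  | DiaB "'ap hs"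
  | DiaE "'ap hs"
  | DiaBbar "'ap hs"
  | DiaEbar "'ap hs"

definition is_trace :: "('s, 'ap) kripke \<Rightarrow> 's list \<Rightarrow> bool" where
  "is_trace K \<rho> \<longleftrightarrow> \<rho> \<noteq> [] \<and> set \<rho> \<subseteq> states K
     \<and> (\<forall>i. Suc i < length \<rho> \<longrightarrow> (\<rho> ! i, \<rho> ! Suc i) \<in> trans K)"

definition initial_trace :: "('s, 'ap) kripke \<Rightarrow> 's list \<Rightarrow> bool" where
  "initial_trace K \<rho> \<longleftrightarrow> is_trace K \<rho> \<and> hd \<rho> = init K"

primrec st_holds :: "('s, 'ap) kripke \<Rightarrow> 's list \<Rightarrow> 'ap hs \<Rightarrow> bool" where
  "st_holds K \<rho> (Prop p) \<longleftrightarrow> (\<forall>s\<in>set \<rho>. p \<in> label K s)"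
| "st_holds K \<rho> (Neg \<psi>) \<longleftrightarrow> \<not> st_holds K \<rho> \<psi>"
| "st_holds K \<rho> (Conj \<psi> \<chi>) \<longleftrightarrow> st_holds K \<rho> \<psi> \<and> st_holds K \<rho> \<chi>"
| "st_holds K \<rho> (DiaB \<psi>) \<longleftrightarrow>
     (\<exists>i. 1 \<le> i \<and> i < length \<rho> \<and> st_holds K (take i \<rho>) \<psi>)"
| "st_holds K \<rho> (DiaE \<psi>) \<longleftrightarrow>
     (\<exists>i. 1 \<le> i \<and> i < length \<rho> \<and> st_holds K (drop i \<rho>) \<psi>)"
| "st_holds K \<rho> (DiaBbar \<psi>) \<longleftrightarrow>
     (\<exists>\<rho>'. is_trace K \<rho>' \<and> length \<rho> < length \<rho>' \<and> take (length \<rho>) \<rho>' = \<rho>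
        \<and> st_holds K \<rho>' \<psi>)"
| "st_holds K \<rho> (DiaEbar \<psi>) \<longleftrightarrow>
     (\<exists>\<rho>'. is_trace K \<rho>' \<and> length \<rho> < length \<rho>'
        \<and> drop (length \<rho>' - length \<rho>) \<rho>' = \<rho> \<and> st_holds K \<rho>' \<psi>)"

definition st_models :: "('s, 'ap) kripke \<Rightarrow> 'ap hs \<Rightarrow> bool" where
  "st_models K \<psi> \<longleftrightarrow> (\<forall>\<rho>. initial_trace K \<rho> \<longrightarrow> st_holds K \<rho> \<psi>)"

definition comp_tree :: "('s, 'ap) kripke \<Rightarrow> ('s list, 'ap) kripke" where
  "comp_tree K = \<lparr> states = {\<rho>. initial_trace K \<rho>},
     trans = {(\<rho>, \<rho> @ [s]) | \<rho> s. initial_trace K \<rho> \<and> (last \<rho>, s) \<in> trans K},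
     label = (\<lambda>\<rho>. label K (last \<rho>)),
     init = [init K] \<rparr>"

definition ct_models :: "('s, 'ap) kripke \<Rightarrow> 'ap hs \<Rightarrow> bool" where
  "ct_models K \<psi> \<longleftrightarrow> st_models (comp_tree K) \<psi>"

definition is_path :: "('s, 'ap) kripke \<Rightarrow> (nat \<Rightarrow> 's) \<Rightarrow> bool" where
  "is_path K \<pi> \<longleftrightarrow> (\<forall>i. \<pi> i \<in> states K \<and> (\<pi> i, \<pi> (Suc i)) \<in> trans K)"

primrec lin_holds :: "('s, 'ap) kripke \<Rightarrow> (nat \<Rightarrow> 's) \<Rightarrow> nat \<Rightarrow> nat \<Rightarrow> 'ap hs \<Rightarrow> bool" where
  "lin_holds K \<pi> x y (Prop p) \<longleftrightarrow> (\<forall>h. x \<le> h \<and> h \<le> y \<longrightarrow> p \<in> label K (\<pi> h))"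
| "lin_holds K \<pi> x y (Neg \<psi>) \<longleftrightarrow> \<not> lin_holds K \<pi> x y \<psi>"
| "lin_holds K \<pi> x y (Conj \<psi> \<chi>) \<longleftrightarrow> lin_holds K \<pi> x y \<psi> \<and> lin_holds K \<pi> x y \<chi>"
| "lin_holds K \<pi> x y (DiaB \<psi>) \<longleftrightarrow> (\<exists>z. x \<le> z \<and> z < y \<and> lin_holds K \<pi> x z \<psi>)"
| "lin_holds K \<pi> x y (DiaE \<psi>) \<longleftrightarrow> (\<exists>v. x < v \<and> v \<le> y \<and> lin_holds K \<pi> v y \<psi>)"
| "lin_holds K \<pi> x y (DiaBbar \<psi>) \<longleftrightarrow> (\<exists>z. y < z \<and> lin_holds K \<pi> x z \<psi>)"
| "lin_holds K \<pi> x y (DiaEbar \<psi>) \<longleftrightarrow> (\<exists>v. v < x \<and> lin_holds K \<pi> v y \<psi>)"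

definition lin_models :: "('s, 'ap) kripke \<Rightarrow> 'ap hs \<Rightarrow> bool" where
  "lin_models K \<psi> \<longleftrightarrow>
     (\<forall>\<pi>. is_path K \<pi> \<and> \<pi> 0 = init K \<longrightarrow> (\<forall>i. lin_holds K \<pi> 0 i \<psi>))"

end

theory Submission
  imports Defs
begin

definition Kn :: "nat \<Rightarrow> nat \<Rightarrow> (nat, 'ap) kripke" where
  "Kn n s0 = \<lparr>states = {..Suc n}, trans = {(i, Suc i) | i. i \<le> n} \<union> {(0,0), (Suc n, Suc n)},
     label = (\<lambda>s. if s = Suc n then UNIV else {}), init = s0\<rparr>"

lemma Kn_simps[simp]:
  "states (Kn n s0) = {..Suc n}"
  "label (Kn n s0) s = (if s = Suc n then UNIV else {})"
  "init (Kn n s0) = s0"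
  "((a,b) \<in> trans (Kn n s0)) = ((b = Suc a \<and> a \<le> n) \<or> (a = 0 \<and> b = 0) \<or> (a = Suc n \<and> b = Suc n))"
  by (auto simp: Kn_def)

type_synonym ty = "nat \<times> nat \<times> nat"

fun tlen :: "ty \<Rightarrow> nat" where "tlen (k,R,m) = k + m"

fun valid :: "nat \<Rightarrow> ty \<Rightarrow> bool" where
  "valid n (k,R,m) = (1 \<le> k + m \<and> R \<le> n \<and> (0 < m \<longrightarrow> R = 0) \<and> (k = 0 \<longrightarrow> R = 0))"

fun tr :: "nat \<Rightarrow> ty \<Rightarrow> nat list" where
  "tr n (k,R,m) = map (\<lambda>t. (n - R + 1 + t) - k) [0..<k] @ replicate m (Suc n)"

fun prefixtype :: "nat \<Rightarrow> ty \<Rightarrow> nat \<Rightarrow> ty" where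
  "prefixtype n (k,R,m) i = (if i \<le> k then (i, min n (R + (k - i)), 0) else (k, R, i - k))"

fun suffixtype :: "ty \<Rightarrow> nat \<Rightarrow> ty" where
  "suffixtype (k,R,m) i = (if i < k then (k - i, R, m) else (0, 0, m - (i - k)))"

lemma length_tr[simp]: "length (tr n \<tau>) = tlen \<tau>"
  by (cases \<tau>) auto

lemma tr_nth: "i < k + m \<Longrightarrow> tr n (k,R,m) ! i = (if i < k then (n - R + 1 + i) - k else Suc n)"
  by (auto simp: nth_append)

lemma tr_snoc:
  assumes v: "valid n (k,R,m)" and t: "(last (tr n (k,R,m)), s) \<in> trans (Kn n s0)"
  shows "\<exists>\<sigma>. valid n \<sigma> \<and> tr n \<sigma> = tr n (k,R,m) @ [s]"
proof (cases "m > 0")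
  case True
  then have "last (tr n (k,R,m)) = Suc n" by (cases m) auto
  with t have "s = Suc n" by auto
  then show ?thesis using v True
    by (intro exI[of _ "(k,R,Suc m)"]) (auto simp: replicate_append_same)
next
  case False
  then have m: "m = 0" by simp
  with v have k: "k \<ge> 1" by simp
  then have l: "last (tr n (k,R,m)) = n - R" using m
    by (cases k) auto
  show ?thesis
  proof (cases "s = Suc n")
    case True
    with t l v have "R = 0" by auto
    then show ?thesis using True m k
      by (intro exI[of _ "(k,0,1)"]) simp
  next
    case False
    with t l have s: "s = n - R + 1 \<and> n - R \<le> n \<or> (n - R = 0 \<and> s = 0)" by auto
    with v have sn: "s \<le> n" using False t l by auto
    have "tr n (Suc k, n - s, 0) = tr n (k,R,m) @ [s]"
    proof -
      have "tr n (Suc k, n - s, 0) = map (\<lambda>t. (n - (n - s) + 1 + t) - Suc k) [0..<k] @ [(n - (n - s) + 1 + k) - Suc k]"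
        by simp
      also have "map (\<lambda>t. (n - (n - s) + 1 + t) - Suc k) [0..<k] = map (\<lambda>t. (n - R + 1 + t) - k) [0..<k]"
        using s sn by (intro map_cong) auto
      finally show ?thesis using m sn by simp
    qed
    then show ?thesis using sn by (intro exI[of _ "(Suc k, n - s, 0)"]) simp
  qed
qed


lemma is_trace_snoc:
  "is_trace K (\<rho> @ [s]) \<longleftrightarrow> (\<rho> = [] \<and> s \<in> states K) \<or> (\<rho> \<noteq> [] \<and> is_trace K \<rho> \<and> s \<in> states K \<and> (last \<rho>, s) \<in> trans K)"
proof (cases "\<rho> = []")
  case True then show ?thesis by (auto simp: is_trace_def)
next
  case False
  show ?thesis
  proof
    assume a: "is_trace K (\<rho> @ [s])"
    have "is_trace K \<rho>" unfolding is_trace_def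
    proof (intro conjI allI impI)
      show "\<rho> \<noteq> []" by fact
      show "set \<rho> \<subseteq> states K" using a by (auto simp: is_trace_def)
      fix i assume "Suc i < length \<rho>"
      then show "(\<rho> ! i, \<rho> ! Suc i) \<in> trans K" using a[unfolded is_trace_def]
        by (metis (no_types, lifting) Suc_lessD length_append_singleton less_SucI nth_append)
    qed
    moreover have "(last \<rho>, s) \<in> trans K"
    proof -
      have "Suc (length \<rho> - 1) < length (\<rho> @ [s])" using False by simp
      then have "((\<rho>@[s]) ! (length \<rho> - 1), (\<rho>@[s]) ! Suc (length \<rho> - 1)) \<in> trans K"
        using a by (auto simp: is_trace_def)
      then show ?thesis using False by (simp add: nth_append last_conv_nth)
    qed
    ultimately show "(\<rho> = [] \<and> s \<in> states K) \<or> (\<rho> \<noteq> [] \<and> is_trace K \<rho> \<and> s \<in> states K \<and> (last \<rho>, s) \<in> trans K)"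
      using a False by (auto simp: is_trace_def)
  next
    assume "(\<rho> = [] \<and> s \<in> states K) \<or> (\<rho> \<noteq> [] \<and> is_trace K \<rho> \<and> s \<in> states K \<and> (last \<rho>, s) \<in> trans K)"
    with False have a: "is_trace K \<rho>" "s \<in> states K" "(last \<rho>, s) \<in> trans K" by auto
    show "is_trace K (\<rho> @ [s])" unfolding is_trace_def
    proof (intro conjI allI impI)
      show "\<rho> @ [s] \<noteq> []" by simp
      show "set (\<rho> @ [s]) \<subseteq> states K" using a by (auto simp: is_trace_def)
      fix i assume i: "Suc i < length (\<rho> @ [s])"
      show "((\<rho> @ [s]) ! i, (\<rho> @ [s]) ! Suc i) \<in> trans K"
      proof (cases "Suc i < length \<rho>")
        case True then show ?thesis using a(1) by (simp add: nth_append is_trace_def)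
      next
        case False
        then have "Suc i = length \<rho>" using i by simp
        have "\<rho> ! i = last \<rho>" using \<open>Suc i = length \<rho>\<close> \<open>\<rho> \<noteq> []\<close>
          by (metis last_conv_nth diff_Suc_1)
        then show ?thesis using a(3) False \<open>Suc i = length \<rho>\<close>
          by (simp add: nth_append)
      qed
    qed
  qed
qed

lemma trace_tr:
  assumes "is_trace (Kn n s0 :: (nat,'ap) kripke) \<rho>" shows "\<exists>\<tau>. valid n \<tau> \<and> \<rho> = tr n \<tau>"
  using assms
proof (induction \<rho> rule: rev_induct)
  case Nil then show ?case by (simp add: is_trace_def)
next
  case (snoc s \<rho>)
  show ?case
  proof (cases "\<rho> = []")
    case True
    with snoc.prems have s: "s \<le> Suc n" by (auto simp: is_trace_def)
    show ?thesis
    proof (cases "s = Suc n")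
      case True then show ?thesis using \<open>\<rho> = []\<close> by (intro exI[of _ "(0,0,1)"]) simp
    next
      case False then show ?thesis using \<open>\<rho> = []\<close> s by (intro exI[of _ "(1,n-s,0)"]) simp
    qed
  next
    case False
    have "is_trace (Kn n s0 :: (nat,'ap) kripke) \<rho> \<and> (last \<rho>, s) \<in> trans (Kn n s0 :: (nat,'ap) kripke)"
      using snoc.prems False unfolding is_trace_snoc by blast
    then have a: "is_trace (Kn n s0 :: (nat,'ap) kripke) \<rho>" "(last \<rho>, s) \<in> trans (Kn n s0 :: (nat,'ap) kripke)" by blast+
    from snoc.IH[OF a(1)] obtain \<tau> where \<tau>: "valid n \<tau>" "\<rho> = tr n \<tau>" by blast
    obtain k R m where "\<tau> = (k,R,m)" by (cases \<tau>)
    then have "valid n (k,R,m)" "(last (tr n (k,R,m)), s) \<in> trans (Kn n s0 :: (nat,'ap) kripke)" "\<rho> = tr n (k,R,m)"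
      using \<tau> a by simp_all
    then obtain \<sigma> where "valid n \<sigma>" "tr n \<sigma> = tr n (k,R,m) @ [s]" using tr_snoc by blast
    then show ?thesis using \<open>\<rho> = tr n (k,R,m)\<close> by metis
  qed
qed

lemma tr_trace:
  assumes v: "valid n \<tau>" shows "is_trace (Kn n s0) (tr n \<tau>)"
proof -
  obtain k R m where e: "\<tau> = (k,R,m)" by (cases \<tau>)
  show ?thesis unfolding is_trace_def
  proof (intro conjI allI impI)
    show "tr n \<tau> \<noteq> []" using v e by (auto)
    show "set (tr n \<tau>) \<subseteq> states (Kn n s0)" using e by auto
    fix i assume i: "Suc i < length (tr n \<tau>)"
    then have i1: "Suc i < k + m" using e by simp
    show "(tr n \<tau> ! i, tr n \<tau> ! Suc i) \<in> trans (Kn n s0)"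
      unfolding e Kn_simps tr_nth[OF i1] tr_nth[OF Suc_lessD[OF i1]]
      using v e i1 by auto
  qed
qed


lemma tr_inj:
  assumes "valid n \<tau>" "valid n \<sigma>" "tr n \<tau> = tr n \<sigma>" shows "\<tau> = \<sigma>"
proof -
  obtain k R m where e: "\<tau> = (k,R,m)" by (cases \<tau>)
  obtain k' R' m' where e': "\<sigma> = (k',R',m')" by (cases \<sigma>)
  have f: "\<And>k R m. filter (\<lambda>x. x = Suc n) (tr n (k,R,m)) = replicate m (Suc n)"
  proof -
    fix k R m
    have "filter (\<lambda>x. x = Suc n) (map (\<lambda>t. (n - R + 1 + t) - k) [0..<k]) = []"
      by (auto simp: filter_empty_conv)
    then show "filter (\<lambda>x. x = Suc n) (tr n (k,R,m)) = replicate m (Suc n)" by simp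
  qed
  have "m = m'" using f[of k R m] f[of k' R' m'] assms(3) e e' by (metis length_replicate)
  moreover have "k = k'" using assms(3) e e' calculation
    by (metis add_right_cancel length_tr tlen.simps)
  moreover have "R = R'"
  proof (cases "k = 0")
    case True then show ?thesis using assms e e' calculation by simp
  next
    case False
    then have "tr n \<tau> ! (k - 1) = n - R" "tr n \<sigma> ! (k - 1) = n - R'"
      using e e' \<open>k = k'\<close> tr_nth[of "k-1" k m n R] tr_nth[of "k-1" k m' n R'] by auto
    then show ?thesis using assms e e' by auto
  qed
  ultimately show ?thesis using e e' by simp
qed

lemma take_tr:
  assumes "1 \<le> i" "i \<le> tlen \<tau>" shows "take i (tr n \<tau>) = tr n (prefixtype n \<tau> i)"
proof -
  obtain k R m where e: "\<tau> = (k,R,m)" by (cases \<tau>)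
  show ?thesis
  proof (cases "i \<le> k")
    case True
    have "take i (tr n \<tau>) = map (\<lambda>t. (n - R + 1 + t) - k) [0..<i]" using e True by (simp add: take_map)
    also have "\<dots> = map (\<lambda>t. (n - min n (R + (k - i)) + 1 + t) - i) [0..<i]"
      using True by (intro map_cong) auto
    finally show ?thesis using e True by simp
  next
    case False
    then show ?thesis using e assms by (simp add: take_map)
  qed
qed

lemma drop_tr:
  assumes "i < tlen \<tau>" shows "drop i (tr n \<tau>) = tr n (suffixtype \<tau> i)"
proof -
  obtain k R m where e: "\<tau> = (k,R,m)" by (cases \<tau>)
  show ?thesis
  proof (cases "i < k")
    case True
    have "drop i (tr n \<tau>) = map (\<lambda>t. (n - R + 1 + t) - k) [i..<k] @ replicate m (Suc n)" using e True by (simp add: drop_map)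
    also have "map (\<lambda>t. (n - R + 1 + t) - k) [i..<k] = map (\<lambda>t. (n - R + 1 + t) - (k - i)) [0..<k-i]"
    proof -
      have "[i..<k] = map (\<lambda>t. t + i) [0..<k-i]" using map_add_upt[of i "k-i"] True by simp
      then show ?thesis using True by (simp add: add.assoc)
    qed
    finally show ?thesis using e True by simp
  next
    case False
    then show ?thesis using e assms by simp
  qed
qed

lemma hd_tr: assumes "valid n (k,R,m)" shows "hd (tr n (k,R,m)) = (if 0 < k then (n - R + 1) - k else Suc n)"
proof -
  have ne: "tr n (k,R,m) \<noteq> []" using assms by auto
  have "hd (tr n (k,R,m)) = tr n (k,R,m) ! 0" using ne by (simp add: hd_conv_nth)
  also have "\<dots> = (if 0 < k then (n - R + 1) - k else Suc n)" using tr_nth[of 0 k m n R] assms by auto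
  finally show ?thesis .
qed


lemma valid_prefix: "valid n \<tau> \<Longrightarrow> 1 \<le> i \<Longrightarrow> i \<le> tlen \<tau> \<Longrightarrow> valid n (prefixtype n \<tau> i)"
  by (cases \<tau>) auto

lemma tlen_prefix: "1 \<le> i \<Longrightarrow> i \<le> tlen \<tau> \<Longrightarrow> tlen (prefixtype n \<tau> i) = i"
  by (cases \<tau>) auto

lemma valid_suffix: "valid n \<tau> \<Longrightarrow> i < tlen \<tau> \<Longrightarrow> valid n (suffixtype \<tau> i)"
  by (cases \<tau>) auto

lemma tlen_suffix: "i < tlen \<tau> \<Longrightarrow> tlen (suffixtype \<tau> i) = tlen \<tau> - i"
  by (cases \<tau>) auto

primrec asem :: "nat \<Rightarrow> 'ap hs \<Rightarrow> ty \<Rightarrow> bool" where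
  "asem n (Prop p) \<tau> = (fst \<tau> = 0)"
| "asem n (Neg \<psi>) \<tau> = (\<not> asem n \<psi> \<tau>)"
| "asem n (Conj \<psi> \<chi>) \<tau> = (asem n \<psi> \<tau> \<and> asem n \<chi> \<tau>)"
| "asem n (DiaB \<psi>) \<tau> = (\<exists>i. 1 \<le> i \<and> i < tlen \<tau> \<and> asem n \<psi> (prefixtype n \<tau> i))"
| "asem n (DiaE \<psi>) \<tau> = (\<exists>i. 1 \<le> i \<and> i < tlen \<tau> \<and> asem n \<psi> (suffixtype \<tau> i))"
| "asem n (DiaBbar \<psi>) \<tau> = (\<exists>\<sigma>. valid n \<sigma> \<and> tlen \<tau> < tlen \<sigma> \<and> prefixtype n \<sigma> (tlen \<tau>) = \<tau> \<and> asem n \<psi> \<sigma>)"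
| "asem n (DiaEbar \<psi>) \<tau> = (\<exists>\<sigma>. valid n \<sigma> \<and> tlen \<tau> < tlen \<sigma> \<and> suffixtype \<sigma> (tlen \<sigma> - tlen \<tau>) = \<tau> \<and> asem n \<psi> \<sigma>)"

lemma tlen_pos: "valid n \<tau> \<Longrightarrow> 1 \<le> tlen \<tau>"
  by (cases \<tau>) auto

lemma prop_tr: "valid n \<tau> \<Longrightarrow> (\<forall>s\<in>set (tr n \<tau>). s = Suc n) = (fst \<tau> = 0)"
proof -
  assume v: "valid n \<tau>"
  obtain k R m where e: "\<tau> = (k,R,m)" by (cases \<tau>)
  show ?thesis
  proof (cases "k = 0")
    case True then show ?thesis using e by simp
  next
    case False
    then have "tr n \<tau> ! 0 \<in> set (tr n \<tau>)" using e by (intro nth_mem) simp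
    moreover have "tr n \<tau> ! 0 \<le> n" using e False tr_nth[of 0 k m n R] by simp
    ultimately show ?thesis using e False by (metis Suc_n_not_le_n fst_conv)
  qed
qed

lemma st_red:
  assumes "valid n \<tau>"
  shows "st_holds (Kn n s0 :: (nat,'ap) kripke) (tr n \<tau>) \<phi> = asem n \<phi> \<tau>"
  using assms
proof (induction \<phi> arbitrary: \<tau>)
  case (Prop p)
  have "st_holds (Kn n s0 :: (nat,'ap) kripke) (tr n \<tau>) (Prop p) = (\<forall>s\<in>set (tr n \<tau>). s = Suc n)"
    by auto
  then show ?case using prop_tr[OF Prop.prems] by simp
next
  case (Neg \<phi>) then show ?case by simp
next
  case (Conj \<phi>1 \<phi>2) then show ?case by simp
next
  case (DiaB \<phi>)
  have "st_holds (Kn n s0 :: (nat,'ap) kripke) (tr n \<tau>) (DiaB \<phi>) =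
     (\<exists>i. 1 \<le> i \<and> i < tlen \<tau> \<and> st_holds (Kn n s0 :: (nat,'ap) kripke) (tr n (prefixtype n \<tau> i)) \<phi>)"
    by (auto simp: take_tr)
  also have "\<dots> = (\<exists>i. 1 \<le> i \<and> i < tlen \<tau> \<and> asem n \<phi> (prefixtype n \<tau> i))"
    using DiaB.IH valid_prefix[OF DiaB.prems] by (meson less_imp_le)
  finally show ?case by simp
next
  case (DiaE \<phi>)
  have "st_holds (Kn n s0 :: (nat,'ap) kripke) (tr n \<tau>) (DiaE \<phi>) =
     (\<exists>i. 1 \<le> i \<and> i < tlen \<tau> \<and> st_holds (Kn n s0 :: (nat,'ap) kripke) (tr n (suffixtype \<tau> i)) \<phi>)"
    by (auto simp: drop_tr)
  also have "\<dots> = (\<exists>i. 1 \<le> i \<and> i < tlen \<tau> \<and> asem n \<phi> (suffixtype \<tau> i))"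
    using DiaE.IH valid_suffix[OF DiaE.prems] by meson
  finally show ?case by simp
next
  case (DiaBbar \<phi>)
  note v = DiaBbar.prems
  show ?case
  proof
    assume "st_holds (Kn n s0 :: (nat,'ap) kripke) (tr n \<tau>) (DiaBbar \<phi>)"
    then obtain \<rho>' where r: "is_trace (Kn n s0 :: (nat,'ap) kripke) \<rho>'" "tlen \<tau> < length \<rho>'"
      "take (tlen \<tau>) \<rho>' = tr n \<tau>" "st_holds (Kn n s0 :: (nat,'ap) kripke) \<rho>' \<phi>" by auto
    obtain \<sigma> where s: "valid n \<sigma>" "\<rho>' = tr n \<sigma>" using trace_tr[OF r(1)] by blast
    have "tr n (prefixtype n \<sigma> (tlen \<tau>)) = tr n \<tau>"
      using r s take_tr[of "tlen \<tau>" \<sigma> n] tlen_pos[OF v] by simp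
    then have "prefixtype n \<sigma> (tlen \<tau>) = \<tau>"
      using tr_inj valid_prefix[OF s(1), of "tlen \<tau>"] v r s tlen_pos[OF v] by simp
    moreover have "tlen \<tau> < tlen \<sigma>" using r s by simp
    ultimately show "asem n (DiaBbar \<phi>) \<tau>" unfolding asem.simps using s r DiaBbar.IH[OF s(1)] by blast
  next
    assume "asem n (DiaBbar \<phi>) \<tau>"
    then obtain \<sigma> where s: "valid n \<sigma>" "tlen \<tau> < tlen \<sigma>" "prefixtype n \<sigma> (tlen \<tau>) = \<tau>" "asem n \<phi> \<sigma>" unfolding asem.simps by blast
    have "take (tlen \<tau>) (tr n \<sigma>) = tr n \<tau>" using take_tr[of "tlen \<tau>" \<sigma> n] s tlen_pos[OF v] by simp
    moreover have tt: "is_trace (Kn n s0 :: (nat,'ap) kripke) (tr n \<sigma>)" by (rule tr_trace[OF s(1)])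
    ultimately show "st_holds (Kn n s0 :: (nat,'ap) kripke) (tr n \<tau>) (DiaBbar \<phi>)"
      using s tt DiaBbar.IH[OF s(1)] 
      unfolding st_holds.simps length_tr by (intro exI[of _ "tr n \<sigma>"]) simp
  qed
next
  case (DiaEbar \<phi>)
  note v = DiaEbar.prems
  show ?case
  proof
    assume "st_holds (Kn n s0 :: (nat,'ap) kripke) (tr n \<tau>) (DiaEbar \<phi>)"
    then obtain \<rho>' where r: "is_trace (Kn n s0 :: (nat,'ap) kripke) \<rho>'" "tlen \<tau> < length \<rho>'"
      "drop (length \<rho>' - tlen \<tau>) \<rho>' = tr n \<tau>" "st_holds (Kn n s0 :: (nat,'ap) kripke) \<rho>' \<phi>" by auto
    obtain \<sigma> where s: "valid n \<sigma>" "\<rho>' = tr n \<sigma>" using trace_tr[OF r(1)] by blast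
    have lt: "tlen \<sigma> - tlen \<tau> < tlen \<sigma>" using r s tlen_pos[OF v] by simp
    have "tr n (suffixtype \<sigma> (tlen \<sigma> - tlen \<tau>)) = tr n \<tau>"
      using r s drop_tr[OF lt, of n] by simp
    then have "suffixtype \<sigma> (tlen \<sigma> - tlen \<tau>) = \<tau>"
      using tr_inj valid_suffix[OF s(1) lt] v by simp
    moreover have "tlen \<tau> < tlen \<sigma>" using r s by simp
    ultimately show "asem n (DiaEbar \<phi>) \<tau>" unfolding asem.simps using s r DiaEbar.IH[OF s(1)] by blast
  next
    assume "asem n (DiaEbar \<phi>) \<tau>"
    then obtain \<sigma> where s: "valid n \<sigma>" "tlen \<tau> < tlen \<sigma>" "suffixtype \<sigma> (tlen \<sigma> - tlen \<tau>) = \<tau>" "asem n \<phi> \<sigma>" unfolding asem.simps by blast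
    have lt: "tlen \<sigma> - tlen \<tau> < tlen \<sigma>" using s tlen_pos[OF v] by simp
    have "drop (tlen \<sigma> - tlen \<tau>) (tr n \<sigma>) = tr n \<tau>" using drop_tr[OF lt, of n] s by simp
    moreover have tt: "is_trace (Kn n s0 :: (nat,'ap) kripke) (tr n \<sigma>)" by (rule tr_trace[OF s(1)])
    ultimately show "st_holds (Kn n s0 :: (nat,'ap) kripke) (tr n \<tau>) (DiaEbar \<phi>)"
      using s tt DiaEbar.IH[OF s(1)] 
      unfolding st_holds.simps length_tr by (intro exI[of _ "tr n \<sigma>"]) simp
  qed
qed

fun rel :: "nat \<Rightarrow> ty \<Rightarrow> ty \<Rightarrow> bool" where
  "rel T (k,R,m) (k',R',m') = (min T k = min T k' \<and> min T R = min T R' \<and> min T m = min T m')"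

lemma cap_mono: "t \<le> T \<Longrightarrow> min T a = min T (b::nat) \<Longrightarrow> min t a = min t b"
  unfolding min_def by (auto split: if_splits)
lemma cap_add: "min t a = min t a' \<Longrightarrow> min t b = min t b' \<Longrightarrow> min t (a+b) = min t (a'+(b'::nat))"
  unfolding min_def by (auto split: if_splits)
lemma cap_zero: "1 \<le> t \<Longrightarrow> min t a = min t (b::nat) \<Longrightarrow> (a = 0) = (b = 0)"
  unfolding min_def by (auto split: if_splits)
lemma cap_pos: "1 \<le> t \<Longrightarrow> min t a = min t (b::nat) \<Longrightarrow> (1 \<le> a) = (1 \<le> b)"
  unfolding min_def by (auto split: if_splits)
lemma cap_minn: "t \<le> n \<Longrightarrow> min t (min n x) = min t (x::nat)"
  by (simp add: min_def)

lemma cap_split: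
  assumes "2*t \<le> T" "min T X = min T (X'::nat)" "a \<le> X"
  shows "\<exists>a'. a' \<le> X' \<and> min t a' = min t a \<and> min t (X' - a') = min t (X - a)"
proof (cases "X < T")
  case True then have "X' = X" using assms by (auto simp: min_def split: if_splits)
  then show ?thesis using assms by blast
next
  case False
  then have X': "X' \<ge> T" using assms by (auto simp: min_def split: if_splits)
  show ?thesis
  proof (cases "a < t")
    case True 
    have "min t a = a" "min t (X' - a) = t" "min t (X - a) = t" using True X' False assms by auto
    then show ?thesis using True X' assms by (intro exI[of _ a]) auto
  next
    case a: False
    show ?thesis
    proof (cases "X - a < t")
      case True 
      have "min t a = t" "min t (X' - (X' - (X - a))) = X - a" "min t (X - a) = X - a" "min t (X' - (X - a)) = t"
        using True X' False assms a by auto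
      then show ?thesis by (intro exI[of _ "X' - (X - a)"]) auto
    next
      case b: False
      have "min t a = t" "min t (X' - t) = t" "min t (X - a) = t" "min t t = t"
        using b X' False assms a by auto
      then show ?thesis using X' assms by (intro exI[of _ t]) auto
    qed
  qed
qed

lemma rel_sym: "rel T \<tau> \<tau>' = rel T \<tau>' \<tau>"
  by (cases \<tau>; cases \<tau>') auto

lemma rel_mono: "t \<le> T \<Longrightarrow> rel T \<tau> \<tau>' \<Longrightarrow> rel t \<tau> \<tau>'"
  by (cases \<tau>; cases \<tau>') (auto intro: cap_mono)

lemma fB:
  assumes v: "valid n (k,R,m)" "valid n (k',R',m')" and r: "rel T (k,R,m) (k',R',m')"
    and th: "2*t \<le> T" "1 \<le> t" "T \<le> n" and i: "1 \<le> i" "i < k + m"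
  shows "\<exists>i'. 1 \<le> i' \<and> i' < k' + m' \<and> rel t (prefixtype n (k,R,m) i) (prefixtype n (k',R',m') i')"
proof -
  have tT: "t \<le> T" using th by simp
  have rk: "min T k = min T k'" and rR: "min T R = min T R'" and rm: "min T m = min T m'" using r by auto
  show ?thesis
  proof (cases "i \<le> k")
    case True
    obtain i' where i': "i' \<le> k'" "min t i' = min t i" "min t (k' - i') = min t (k - i)"
      using cap_split[OF th(1) rk True] by blast
    have i1: "1 \<le> i'" using cap_pos[OF th(2) i'(2)] i by simp
    have i2: "i' < k' + m'"
    proof (cases "i < k")
      case True then have "k - i \<noteq> 0" by simp
      then have "k' - i' \<noteq> 0" using cap_zero[OF th(2) i'(3)] by simp
      then show ?thesis by simp
    next
      case False then have "m \<noteq> 0" using i \<open>i \<le> k\<close> by simp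
      then have "m' \<noteq> 0" using cap_zero[of T m m'] rm th by simp
      then show ?thesis using i' by simp
    qed
    have "min t (min n (R + (k - i))) = min t (min n (R' + (k' - i')))"
      using cap_add[OF cap_mono[OF tT rR] i'(3)[symmetric]] cap_minn th by simp
    then show ?thesis using i1 i2 i' True by (intro exI[of _ i']) simp
  next
    case False
    have mu: "i - k \<le> m" using i by simp
    obtain u where u: "u \<le> m'" "min t u = min t (i - k)" "min t (m' - u) = min t (m - (i - k))"
      using cap_split[OF th(1) rm mu] by blast
    have u1: "1 \<le> u" using cap_pos[OF th(2) u(2)] False by simp
    have "m - (i - k) \<noteq> 0" using i False by arith
    then have "m' - u \<noteq> 0" using cap_zero[OF th(2) u(3)] by metis
    then have u2: "u < m'" by simp
    show ?thesis using u u1 u2 False cap_mono[OF tT rk] cap_mono[OF tT rR]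
      by (intro exI[of _ "k' + u"]) simp
  qed
qed

lemma fE:
  assumes v: "valid n (k,R,m)" "valid n (k',R',m')" and r: "rel T (k,R,m) (k',R',m')"
    and th: "2*t \<le> T" "1 \<le> t" "T \<le> n" and i: "1 \<le> i" "i < k + m"
  shows "\<exists>i'. 1 \<le> i' \<and> i' < k' + m' \<and> rel t (suffixtype (k,R,m) i) (suffixtype (k',R',m') i')"
proof -
  have tT: "t \<le> T" using th by simp
  have rk: "min T k = min T k'" and rR: "min T R = min T R'" and rm: "min T m = min T m'" using r by auto
  show ?thesis
  proof (cases "i < k")
    case True
    obtain i' where i': "i' \<le> k'" "min t i' = min t i" "min t (k' - i') = min t (k - i)"
      using cap_split[OF th(1) rk] True by (meson less_imp_le)
    have i1: "1 \<le> i'" using cap_pos[OF th(2) i'(2)] i by simp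
    have i2: "i' < k'" using cap_zero[OF th(2) i'(3)] True i'(1) by simp
    show ?thesis using i1 i2 i' True cap_mono[OF tT rR] cap_mono[OF tT rm]
      by (intro exI[of _ i']) simp
  next
    case False
    have mu: "i - k \<le> m" using i by simp
    obtain u where u: "u \<le> m'" "min t u = min t (i - k)" "min t (m' - u) = min t (m - (i - k))"
      using cap_split[OF th(1) rm mu] by blast
    have "m - (i - k) \<noteq> 0" using i False by arith
    then have "m' - u \<noteq> 0" using cap_zero[OF th(2) u(3)] by metis
    then have u2: "u < m'" by simp
    have i1: "1 \<le> k' + u"
    proof (cases "k = 0")
      case True then have "1 \<le> i - k" using i by simp
      then show ?thesis using cap_pos[OF th(2) u(2)] by simp
    next
      case False then have "k' \<noteq> 0" using cap_zero[of T k k'] rk th by simp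
      then show ?thesis by simp
    qed
    show ?thesis using u u2 i1 False
      by (intro exI[of _ "k' + u"]) simp
  qed
qed

lemma fBb:
  assumes v: "valid n (k,R,m)" "valid n (k',R',m')" and r: "rel T (k,R,m) (k',R',m')"
    and th: "2*t \<le> T" "1 \<le> t" "T \<le> n"
    and s: "valid n \<sigma>" "k + m < tlen \<sigma>" "prefixtype n \<sigma> (k + m) = (k,R,m)"
  shows "\<exists>\<sigma>'. valid n \<sigma>' \<and> k' + m' < tlen \<sigma>' \<and> prefixtype n \<sigma>' (k' + m') = (k',R',m') \<and> rel t \<sigma> \<sigma>'"
proof -
  have tT: "t \<le> T" using th by simp
  have rk: "min T k = min T k'" and rR: "min T R = min T R'" and rm: "min T m = min T m'" using r by auto
  obtain K S M where e: "\<sigma> = (K,S,M)" by (cases \<sigma>)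
  show ?thesis
  proof (cases "m > 0")
    case True
    have "\<not> k + m \<le> K" using s e True by (auto split: if_splits)
    then have KS: "K = k" "S = R" "M > m" using s e by (auto split: if_splits)
    have m': "m' > 0" using cap_zero[of T m m'] rm th True by simp
    then have "R' = 0" using v by simp
    define \<sigma>' where "\<sigma>' = (k', R', m' + (M - m))"
    have "rel t \<sigma> \<sigma>'" unfolding \<sigma>'_def e
      using cap_mono[OF tT rk] cap_mono[OF tT rR] cap_add[OF cap_mono[OF tT rm], of "M - m" "M - m"] KS
      by simp
    moreover have "valid n \<sigma>'" using v m' \<open>R' = 0\<close> unfolding \<sigma>'_def by simp
    moreover have "k' + m' < tlen \<sigma>' \<and> prefixtype n \<sigma>' (k' + m') = (k',R',m')"
      using KS m' unfolding \<sigma>'_def by simp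
    ultimately show ?thesis by blast
  next
    case False
    then have m0: "m = 0" by simp
    then have m'0: "m' = 0" using cap_zero[of T m m'] rm th by simp
    have k1: "k \<ge> 1" using v m0 by simp
    have k'1: "k' \<ge> 1" using v m'0 by simp
    have Kk: "k \<le> K" using s e m0 by (auto split: if_splits)
    then have RS: "R = min n (S + (K - k))" using s e m0 by (auto split: if_splits)
    have pos: "1 \<le> (K - k) + M" using s e m0 by simp
    show ?thesis
    proof (cases "R < T")
      case True
      then have "R' = R" using rR by (simp add: min_def split: if_splits)
      define \<sigma>' where "\<sigma>' = (k' + (K - k), S, M)"
      have "rel t \<sigma> \<sigma>'" unfolding \<sigma>'_def e
        using cap_add[OF cap_mono[OF tT rk], of "K - k" "K - k"] Kk by simp
      moreover have "valid n \<sigma>'" using s e k'1 unfolding \<sigma>'_def by simp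
      moreover have "k' + m' < tlen \<sigma>' \<and> prefixtype n \<sigma>' (k' + m') = (k',R',m')"
        using m'0 pos RS \<open>R' = R\<close> unfolding \<sigma>'_def by simp arith
      ultimately show ?thesis by blast
    next
      case False
      then have R'T: "R' \<ge> T" using rR by (simp add: min_def split: if_splits)
      have R'n: "R' \<le> n" using v by simp
      show ?thesis
      proof (cases "M > 0")
        case True
        then have "S = 0" using s e by simp
        then have "K - k \<ge> T" using RS False by simp
        define \<sigma>' where "\<sigma>' = (k' + R', 0::nat, M)"
        have "rel t \<sigma> \<sigma>'" unfolding \<sigma>'_def e using \<open>S = 0\<close> \<open>K - k \<ge> T\<close> Kk R'T th
          by (simp add: min_def)
        moreover have "valid n \<sigma>'" using k'1 R'n unfolding \<sigma>'_def by simp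
        moreover have "k' + m' < tlen \<sigma>' \<and> prefixtype n \<sigma>' (k' + m') = (k',R',m')"
          using m'0 True R'n unfolding \<sigma>'_def by (simp add: min_def)
        ultimately show ?thesis by blast
      next
        case M0: False
        have X: "min T (S + (K - k)) = min T R'" using RS False R'T th(3) by (simp add: min_def split: if_splits)
        obtain d where d: "d \<le> R'" "min t d = min t (K - k)" "min t (R' - d) = min t (S + (K - k) - (K - k))"
          using cap_split[OF th(1) X, of "K - k"] by auto
        have d1: "1 \<le> d" using cap_pos[OF th(2) d(2)] pos M0 by simp
        define \<sigma>' where "\<sigma>' = (k' + d, R' - d, 0::nat)"
        have "rel t \<sigma> \<sigma>'" unfolding \<sigma>'_def e using d M0 cap_add[OF cap_mono[OF tT rk] d(2)[symmetric]] Kk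
          by simp
        moreover have "valid n \<sigma>'" using k'1 R'n unfolding \<sigma>'_def by simp
        moreover have "k' + m' < tlen \<sigma>' \<and> prefixtype n \<sigma>' (k' + m') = (k',R',m')"
          using m'0 d d1 R'n unfolding \<sigma>'_def by (simp add: min_def)
        ultimately show ?thesis by blast
      qed
    qed
  qed
qed

lemma fEb:
  assumes v: "valid n (k,R,m)" "valid n (k',R',m')" and r: "rel T (k,R,m) (k',R',m')"
    and th: "2*t \<le> T" "1 \<le> t" "T \<le> n"
    and s: "valid n \<sigma>" "k + m < tlen \<sigma>" "suffixtype \<sigma> (tlen \<sigma> - (k + m)) = (k,R,m)"
  shows "\<exists>\<sigma>'. valid n \<sigma>' \<and> k' + m' < tlen \<sigma>' \<and> suffixtype \<sigma>' (tlen \<sigma>' - (k' + m')) = (k',R',m') \<and> rel t \<sigma> \<sigma>'"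
proof -
  have tT: "t \<le> T" using th by simp
  have rk: "min T k = min T k'" and rR: "min T R = min T R'" and rm: "min T m = min T m'" using r by auto
  obtain K S M where e: "\<sigma> = (K,S,M)" by (cases \<sigma>)
  show ?thesis
  proof (cases "k > 0")
    case True
    then have KS: "K + M - (k + m) < K" "S = R" "M = m" "K = k + (K + M - (k + m))" using s e by (auto split: if_splits)
    define i where "i = K + M - (k + m)"
    have i1: "i \<ge> 1" using s e unfolding i_def by simp
    define \<sigma>' where "\<sigma>' = (k' + i, R', m')"
    have "rel t \<sigma> \<sigma>'" unfolding \<sigma>'_def e
      using cap_add[OF cap_mono[OF tT rk], of i i] cap_mono[OF tT rR] cap_mono[OF tT rm] KS
      unfolding i_def by simp
    moreover have "valid n \<sigma>'" using v i1 unfolding \<sigma>'_def by simp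
    moreover have "k' + m' < tlen \<sigma>' \<and> suffixtype \<sigma>' (tlen \<sigma>' - (k' + m')) = (k',R',m')"
      using i1 cap_zero[of T k k'] rk th True unfolding \<sigma>'_def by simp
    ultimately show ?thesis by blast
  next
    case False
    then have k0: "k = 0" by simp
    then have k'0: "k' = 0" using cap_zero[of T k k'] rk th by simp
    have R0: "R = 0" "R' = 0" using v k0 k'0 by auto
    have m1: "m \<ge> 1" "m' \<ge> 1" using v k0 k'0 by auto
    have i: "\<not> K + M - m < K" "M - (K + M - m - K) = m" using s e k0 by (auto split: if_splits)
    define d where "d = M - m"
    have Md: "M = m + d" using i unfolding d_def by auto
    have pos: "1 \<le> K + d" using s e k0 Md by auto
    have S0: "S = 0" using s e Md m1 by simp
    define \<sigma>' where "\<sigma>' = (K, S, m' + d)"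
    have "rel t \<sigma> \<sigma>'" unfolding \<sigma>'_def e
      using cap_add[OF cap_mono[OF tT rm], of d d] Md by simp
    moreover have "valid n \<sigma>'" using s e S0 m1 unfolding \<sigma>'_def by simp
    moreover have "k' + m' < tlen \<sigma>' \<and> suffixtype \<sigma>' (tlen \<sigma>' - (k' + m')) = (k',R',m')"
      using pos k'0 R0 unfolding \<sigma>'_def by simp arith
    ultimately show ?thesis by blast
  qed
qed

primrec dep :: "'ap hs \<Rightarrow> nat" where
  "dep (Prop p) = 0"
| "dep (Neg \<psi>) = dep \<psi>"
| "dep (Conj \<psi> \<chi>) = max (dep \<psi>) (dep \<chi>)"
| "dep (DiaB \<psi>) = Suc (dep \<psi>)"
| "dep (DiaE \<psi>) = Suc (dep \<psi>)"
| "dep (DiaBbar \<psi>) = Suc (dep \<psi>)"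
| "dep (DiaEbar \<psi>) = Suc (dep \<psi>)"

definition thr :: "nat \<Rightarrow> nat" where "thr d = 2 ^ Suc d"

lemma thr_ge1: "1 \<le> thr d" by (simp add: thr_def)
lemma thr_Suc: "thr (Suc d) = 2 * thr d" by (simp add: thr_def)
lemma thr_mono: "d \<le> e \<Longrightarrow> thr d \<le> thr e" by (simp add: thr_def)

lemma gB: assumes a: "valid n \<tau>" "valid n \<tau>'" "rel T \<tau> \<tau>'" and th: "2*t \<le> T" "1 \<le> t" "T \<le> n" and i: "1 \<le> i" "i < tlen \<tau>"
  shows "\<exists>i'. 1 \<le> i' \<and> i' < tlen \<tau>' \<and> rel t (prefixtype n \<tau> i) (prefixtype n \<tau>' i')"
proof -
  obtain k R m where e: "\<tau> = (k,R,m)" by (cases \<tau>)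
  obtain k' R' m' where e': "\<tau>' = (k',R',m')" by (cases \<tau>')
  show ?thesis using fB[of n k R m k' R' m' T t i] a th i unfolding e e' tlen.simps by blast
qed

lemma gE: assumes a: "valid n \<tau>" "valid n \<tau>'" "rel T \<tau> \<tau>'" and th: "2*t \<le> T" "1 \<le> t" "T \<le> n" and i: "1 \<le> i" "i < tlen \<tau>"
  shows "\<exists>i'. 1 \<le> i' \<and> i' < tlen \<tau>' \<and> rel t (suffixtype \<tau> i) (suffixtype \<tau>' i')"
proof -
  obtain k R m where e: "\<tau> = (k,R,m)" by (cases \<tau>)
  obtain k' R' m' where e': "\<tau>' = (k',R',m')" by (cases \<tau>')
  show ?thesis using fE[of n k R m k' R' m' T t i] a th i unfolding e e' tlen.simps by blast
qed

lemma gBb: assumes a: "valid n \<tau>" "valid n \<tau>'" "rel T \<tau> \<tau>'" and th: "2*t \<le> T" "1 \<le> t" "T \<le> n"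
  and s: "valid n \<sigma>" "tlen \<tau> < tlen \<sigma>" "prefixtype n \<sigma> (tlen \<tau>) = \<tau>"
  shows "\<exists>\<sigma>'. valid n \<sigma>' \<and> tlen \<tau>' < tlen \<sigma>' \<and> prefixtype n \<sigma>' (tlen \<tau>') = \<tau>' \<and> rel t \<sigma> \<sigma>'"
proof -
  obtain k R m where e: "\<tau> = (k,R,m)" by (cases \<tau>)
  obtain k' R' m' where e': "\<tau>' = (k',R',m')" by (cases \<tau>')
  show ?thesis using fBb[of n k R m k' R' m' T t \<sigma>] a th s unfolding e e' tlen.simps by blast
qed

lemma gEb: assumes a: "valid n \<tau>" "valid n \<tau>'" "rel T \<tau> \<tau>'" and th: "2*t \<le> T" "1 \<le> t" "T \<le> n"
  and s: "valid n \<sigma>" "tlen \<tau> < tlen \<sigma>" "suffixtype \<sigma> (tlen \<sigma> - tlen \<tau>) = \<tau>"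
  shows "\<exists>\<sigma>'. valid n \<sigma>' \<and> tlen \<tau>' < tlen \<sigma>' \<and> suffixtype \<sigma>' (tlen \<sigma>' - tlen \<tau>') = \<tau>' \<and> rel t \<sigma> \<sigma>'"
proof -
  obtain k R m where e: "\<tau> = (k,R,m)" by (cases \<tau>)
  obtain k' R' m' where e': "\<tau>' = (k',R',m')" by (cases \<tau>')
  have s3: "suffixtype \<sigma> (tlen \<sigma> - (k + m)) = (k,R,m)" using s unfolding e by simp
  show ?thesis using fEb[of n k R m k' R' m' T t \<sigma>] a th s s3 unfolding e e' tlen.simps by blast
qed

lemma st_EF:
  "thr (dep \<phi>) \<le> n \<Longrightarrow> valid n \<tau> \<Longrightarrow> valid n \<tau>' \<Longrightarrow> rel (thr (dep \<phi>)) \<tau> \<tau>' \<Longrightarrow> asem n \<phi> \<tau> = asem n \<phi> \<tau>'"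
proof (induction \<phi> arbitrary: \<tau> \<tau>')
  case (Prop p)
  obtain k R m where e: "\<tau> = (k,R,m)" by (cases \<tau>)
  obtain k' R' m' where e': "\<tau>' = (k',R',m')" by (cases \<tau>')
  have "min (thr 0) k = min (thr 0) k'" using Prop.prems unfolding e e' by simp
  then have "(k = 0) = (k' = 0)" using cap_zero[OF thr_ge1[of 0]] by blast
  then show ?case unfolding e e' by simp
next
  case (Neg \<phi>) then show ?case by simp
next
  case (Conj \<phi>1 \<phi>2)
  have "thr (dep \<phi>1) \<le> thr (dep (Conj \<phi>1 \<phi>2))" "thr (dep \<phi>2) \<le> thr (dep (Conj \<phi>1 \<phi>2))"
    by (auto intro: thr_mono)
  then show ?case using Conj rel_mono by (metis asem.simps(3) order_trans)
next
  case (DiaB \<phi>)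
  define t where "t = thr (dep \<phi>)"
  define T where "T = thr (dep (DiaB \<phi>))"
  have th: "2*t \<le> T" "1 \<le> t" "T \<le> n" "t \<le> n" using DiaB.prems thr_Suc thr_ge1 unfolding t_def T_def by auto
  have dir: "asem n (DiaB \<phi>) b" if hyp: "valid n a" "valid n b" "rel T a b" and that4: "asem n (DiaB \<phi>) a" for a b
  proof -
    obtain i where i: "1 \<le> i" "i < tlen a" "asem n \<phi> (prefixtype n a i)" using that4 by auto
    obtain i' where i': "1 \<le> i'" "i' < tlen b" "rel t (prefixtype n a i) (prefixtype n b i')"
      using gB[OF hyp(1-3) th(1-3) i(1-2)] by blast
    have "asem n \<phi> (prefixtype n b i')"
      using DiaB.IH[of "prefixtype n a i" "prefixtype n b i'"] i i' th hyp valid_prefix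
      unfolding t_def by (meson less_imp_le)
    then show ?thesis using i' by auto
  qed
  show ?case using dir DiaB.prems rel_sym unfolding T_def by metis
next
  case (DiaE \<phi>)
  define t where "t = thr (dep \<phi>)"
  define T where "T = thr (dep (DiaE \<phi>))"
  have th: "2*t \<le> T" "1 \<le> t" "T \<le> n" "t \<le> n" using DiaE.prems thr_Suc thr_ge1 unfolding t_def T_def by auto
  have dir: "asem n (DiaE \<phi>) b" if hyp: "valid n a" "valid n b" "rel T a b" and that4: "asem n (DiaE \<phi>) a" for a b
  proof -
    obtain i where i: "1 \<le> i" "i < tlen a" "asem n \<phi> (suffixtype a i)" using that4 by auto
    obtain i' where i': "1 \<le> i'" "i' < tlen b" "rel t (suffixtype a i) (suffixtype b i')"
      using gE[OF hyp(1-3) th(1-3) i(1-2)] by blast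
    have "asem n \<phi> (suffixtype b i')"
      using DiaE.IH[of "suffixtype a i" "suffixtype b i'"] i i' th hyp valid_suffix
      unfolding t_def by meson
    then show ?thesis using i' by auto
  qed
  show ?case using dir DiaE.prems rel_sym unfolding T_def by metis
next
  case (DiaBbar \<phi>)
  define t where "t = thr (dep \<phi>)"
  define T where "T = thr (dep (DiaBbar \<phi>))"
  have th: "2*t \<le> T" "1 \<le> t" "T \<le> n" "t \<le> n" using DiaBbar.prems thr_Suc thr_ge1 unfolding t_def T_def by auto
  have dir: "asem n (DiaBbar \<phi>) b" if hyp: "valid n a" "valid n b" "rel T a b" and that4: "asem n (DiaBbar \<phi>) a" for a b
  proof -
    obtain \<sigma> where s: "valid n \<sigma>" "tlen a < tlen \<sigma>" "prefixtype n \<sigma> (tlen a) = a" "asem n \<phi> \<sigma>"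
      using that4 unfolding asem.simps by blast
    obtain \<sigma>' where s': "valid n \<sigma>'" "tlen b < tlen \<sigma>'" "prefixtype n \<sigma>' (tlen b) = b" "rel t \<sigma> \<sigma>'"
      using gBb[OF hyp(1-3) th(1-3) s(1-3)] by blast
    have "asem n \<phi> \<sigma>'" using DiaBbar.IH[of \<sigma> \<sigma>'] s s' th unfolding t_def by blast
    then show ?thesis using s' unfolding asem.simps by blast
  qed
  show ?case using dir DiaBbar.prems rel_sym unfolding T_def by metis
next
  case (DiaEbar \<phi>)
  define t where "t = thr (dep \<phi>)"
  define T where "T = thr (dep (DiaEbar \<phi>))"
  have th: "2*t \<le> T" "1 \<le> t" "T \<le> n" "t \<le> n" using DiaEbar.prems thr_Suc thr_ge1 unfolding t_def T_def by auto
  have dir: "asem n (DiaEbar \<phi>) b" if hyp: "valid n a" "valid n b" "rel T a b" and that4: "asem n (DiaEbar \<phi>) a" for a b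
  proof -
    obtain \<sigma> where s: "valid n \<sigma>" "tlen a < tlen \<sigma>" "suffixtype \<sigma> (tlen \<sigma> - tlen a) = a" "asem n \<phi> \<sigma>"
      using that4 unfolding asem.simps by blast
    obtain \<sigma>' where s': "valid n \<sigma>'" "tlen b < tlen \<sigma>'" "suffixtype \<sigma>' (tlen \<sigma>' - tlen b) = b" "rel t \<sigma> \<sigma>'"
      using gEb[OF hyp(1-3) th(1-3) s(1-3)] by blast
    have "asem n \<phi> \<sigma>'" using DiaEbar.IH[of \<sigma> \<sigma>'] s s' th unfolding t_def by blast
    then show ?thesis using s' unfolding asem.simps by blast
  qed
  show ?case using dir DiaEbar.prems rel_sym unfolding T_def by metis
qed

lemma Kn_kripke: "s0 \<le> Suc n \<Longrightarrow> kripke (Kn n s0) \<and> finite (states (Kn n s0))"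
  unfolding kripke_def
proof (intro conjI)
  show "trans (Kn n s0) \<subseteq> states (Kn n s0) \<times> states (Kn n s0)" by (auto simp: Kn_def)
  show "\<forall>s\<in>states (Kn n s0). \<exists>t. (s, t) \<in> trans (Kn n s0)"
  proof
    fix s assume "s \<in> states (Kn n s0)"
    then have "s \<le> Suc n" by simp
    show "\<exists>t. (s, t) \<in> trans (Kn n s0)"
    proof (cases "s \<le> n")
      case True then show ?thesis by (intro exI[of _ "Suc s"]) simp
    next
      case False then have "s = Suc n" using \<open>s \<le> Suc n\<close> by simp
      then show ?thesis by (intro exI[of _ "Suc n"]) simp
    qed
  qed
qed auto

lemma st_models_Kn:
  "st_models (Kn n s0 :: (nat,'ap) kripke) \<phi> = (\<forall>\<tau>. valid n \<tau> \<and> hd (tr n \<tau>) = s0 \<longrightarrow> asem n \<phi> \<tau>)"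
proof
  assume a: "st_models (Kn n s0 :: (nat,'ap) kripke) \<phi>"
  show "\<forall>\<tau>. valid n \<tau> \<and> hd (tr n \<tau>) = s0 \<longrightarrow> asem n \<phi> \<tau>"
  proof (intro allI impI)
    fix \<tau> assume t: "valid n \<tau> \<and> hd (tr n \<tau>) = s0"
    have "is_trace (Kn n s0 :: (nat,'ap) kripke) (tr n \<tau>)" using tr_trace t by blast
    then have "initial_trace (Kn n s0 :: (nat,'ap) kripke) (tr n \<tau>)"
      unfolding initial_trace_def using t by simp
    then have "st_holds (Kn n s0 :: (nat,'ap) kripke) (tr n \<tau>) \<phi>" using a unfolding st_models_def by blast
    then show "asem n \<phi> \<tau>" using st_red t by blast
  qed
next
  assume a: "\<forall>\<tau>. valid n \<tau> \<and> hd (tr n \<tau>) = s0 \<longrightarrow> asem n \<phi> \<tau>"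
  show "st_models (Kn n s0 :: (nat,'ap) kripke) \<phi>" unfolding st_models_def
  proof (intro allI impI)
    fix \<rho> assume r: "initial_trace (Kn n s0 :: (nat,'ap) kripke) \<rho>"
    then obtain \<tau> where t: "valid n \<tau>" "\<rho> = tr n \<tau>" using trace_tr unfolding initial_trace_def by blast
    then have "hd (tr n \<tau>) = s0" using r unfolding initial_trace_def by simp
    then show "st_holds (Kn n s0 :: (nat,'ap) kripke) \<rho> \<phi>" using a t st_red by blast
  qed
qed

lemma min_both: "T \<le> a \<Longrightarrow> T \<le> b \<Longrightarrow> min T a = min T (b::nat)" by simp

lemma match10:
  assumes T: "1 \<le> T" "2 * T \<le> n" and v: "valid n \<tau>" "hd (tr n \<tau>) = 1"
  shows "\<exists>\<tau>'. valid n \<tau>' \<and> hd (tr n \<tau>') = 0 \<and> rel T \<tau> \<tau>'"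
proof -
  obtain k R m where e: "\<tau> = (k,R,m)" by (cases \<tau>)
  have vv: "valid n (k,R,m)" using v e by simp
  have "(if 0 < k then (n - R + 1) - k else Suc n) = 1" using v(2) hd_tr[OF vv] unfolding e by simp
  then have k: "0 < k" "(n - R + 1) - k = 1" using T by (simp_all split: if_splits)
  have vv2: "R \<le> n" "0 < m \<longrightarrow> R = 0" using vv by auto
  have kR: "k = n - R" using k vv2 by linarith
  show ?thesis
  proof (cases "m > 0")
    case True
    then have R0: "R = 0" and kn: "k = n" using vv2 kR by auto
    have a: "valid n (Suc n, 0, m)" using True by simp
    have b: "hd (tr n (Suc n, 0, m)) = 0" using hd_tr[OF a] by simp
    have c: "rel T \<tau> (Suc n, 0, m)" unfolding e rel.simps using R0 kn T min_both[of T k "Suc n"] by simp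
    show ?thesis using a b c by blast
  next
    case False
    then have m0: "m = 0" by simp
    show ?thesis
    proof (cases "k \<ge> T")
      case True
      have a: "valid n (Suc k, R, 0)" using vv2 by simp
      have b: "hd (tr n (Suc k, R, 0)) = 0" using hd_tr[OF a] kR by simp
      have c: "rel T \<tau> (Suc k, R, 0)" unfolding e rel.simps using True m0 by simp
      show ?thesis using a b c by blast
    next
      case kT: False
      then have RT: "R \<ge> T" using kR T vv2 by linarith
      have a: "valid n (k, n, 0)" using k by simp
      have b: "hd (tr n (k, n, 0)) = 0" using hd_tr[OF a] k by simp
      have c: "rel T \<tau> (k, n, 0)" unfolding e rel.simps using RT T m0 by simp
      show ?thesis using a b c by blast
    qed
  qed
qed

lemma match01:
  assumes T: "1 \<le> T" "2 * T \<le> n" and v: "valid n \<tau>" "hd (tr n \<tau>) = 0"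
  shows "\<exists>\<tau>'. valid n \<tau>' \<and> hd (tr n \<tau>') = 1 \<and> rel T \<tau> \<tau>'"
proof -
  obtain k R m where e: "\<tau> = (k,R,m)" by (cases \<tau>)
  have vv: "valid n (k,R,m)" using v e by simp
  have "(if 0 < k then (n - R + 1) - k else Suc n) = 0" using v(2) hd_tr[OF vv] unfolding e by simp
  then have k: "0 < k" "(n - R + 1) - k = 0" using T by (simp_all split: if_splits)
  have vv2: "R \<le> n" "0 < m \<longrightarrow> R = 0" using vv by auto
  have kR: "k \<ge> n - R + 1" using k vv2 by linarith
  show ?thesis
  proof (cases "m > 0")
    case True
    then have R0: "R = 0" and kn: "k \<ge> n + 1" using vv2 kR by auto
    have a: "valid n (n, 0, m)" using True by simp
    have b: "hd (tr n (n, 0, m)) = 1" using hd_tr[OF a] T by simp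
    have c: "rel T \<tau> (n, 0, m)" unfolding e rel.simps using R0 kn T min_both[of T k n] by simp
    show ?thesis using a b c by blast
  next
    case False
    then have m0: "m = 0" by simp
    show ?thesis
    proof (cases "k < T")
      case True
      then have nk: "n - k \<ge> T" and RT: "R \<ge> T" using kR T vv2 by linarith+
      have a: "valid n (k, n - k, 0)" using k by simp
      have b: "hd (tr n (k, n - k, 0)) = 1" using hd_tr[OF a] k True T by simp
      have c: "rel T \<tau> (k, n - k, 0)" unfolding e rel.simps using RT nk m0 by simp
      show ?thesis using a b c by blast
    next
      case kT: False
      show ?thesis
      proof (cases "R < T")
        case True
        then have nR: "n - R \<ge> T" using T by linarith
        have a: "valid n (n - R, R, 0)" using nR T vv2 by simp
        have b: "hd (tr n (n - R, R, 0)) = 1" using hd_tr[OF a] nR T vv2 by simp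
        have c: "rel T \<tau> (n - R, R, 0)" unfolding e rel.simps using kT nR m0 by simp
        show ?thesis using a b c by blast
      next
        case RT: False
        have a: "valid n (T, n - T, 0)" using T by simp
        have b: "hd (tr n (T, n - T, 0)) = 1" using hd_tr[OF a] T by simp
        have c: "rel T \<tau> (T, n - T, 0)" unfolding e rel.simps using kT RT T m0 by simp
        show ?thesis using a b c by blast
      qed
    qed
  qed
qed

lemma st_same:
  assumes n: "n = 2 * thr (dep \<phi>)"
  shows "st_models (Kn n 0 :: (nat,'ap) kripke) \<phi> = st_models (Kn n 1 :: (nat,'ap) kripke) \<phi>"
proof -
  define T where "T = thr (dep \<phi>)"
  have T: "1 \<le> T" "2 * T \<le> n" "T \<le> n" using thr_ge1 n unfolding T_def by auto
  show ?thesis unfolding st_models_Kn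
  proof
    assume a: "\<forall>\<tau>. valid n \<tau> \<and> hd (tr n \<tau>) = 0 \<longrightarrow> asem n \<phi> \<tau>"
    show "\<forall>\<tau>. valid n \<tau> \<and> hd (tr n \<tau>) = 1 \<longrightarrow> asem n \<phi> \<tau>"
    proof (intro allI impI)
      fix \<tau> assume t: "valid n \<tau> \<and> hd (tr n \<tau>) = 1"
      obtain \<tau>' where t': "valid n \<tau>'" "hd (tr n \<tau>') = 0" "rel T \<tau> \<tau>'" using match10[OF T(1,2)] t by blast
      then show "asem n \<phi> \<tau>" using st_EF[of \<phi> n \<tau> \<tau>'] a t T unfolding T_def by blast
    qed
  next
    assume a: "\<forall>\<tau>. valid n \<tau> \<and> hd (tr n \<tau>) = 1 \<longrightarrow> asem n \<phi> \<tau>"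
    show "\<forall>\<tau>. valid n \<tau> \<and> hd (tr n \<tau>) = 0 \<longrightarrow> asem n \<phi> \<tau>"
    proof (intro allI impI)
      fix \<tau> assume t: "valid n \<tau> \<and> hd (tr n \<tau>) = 0"
      obtain \<tau>' where t': "valid n \<tau>'" "hd (tr n \<tau>') = 1" "rel T \<tau> \<tau>'" using match01[OF T(1,2)] t by blast
      then show "asem n \<phi> \<tau>" using st_EF[of \<phi> n \<tau> \<tau>'] a t T unfolding T_def by blast
    qed
  qed
qed

definition psi :: "'ap hs" where "psi = DiaBbar (DiaE (Prop undefined))"

lemma lin0: "\<not> lin_models (Kn n 0 :: (nat,'ap) kripke) psi"
proof -
  have "is_path (Kn n 0 :: (nat,'ap) kripke) (\<lambda>_. 0)" unfolding is_path_def by simp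
  moreover have "\<not> lin_holds (Kn n 0 :: (nat,'ap) kripke) (\<lambda>_. 0) 0 0 psi"
    unfolding psi_def by auto
  ultimately show ?thesis unfolding lin_models_def by force
qed

lemma path1:
  assumes "is_path (Kn n 1 :: (nat,'ap) kripke) \<pi>" "\<pi> 0 = 1"
  shows "\<pi> i = min (Suc i) (Suc n)"
proof (induction i)
  case 0 then show ?case using assms by simp
next
  case (Suc i)
  have t: "(\<pi> i, \<pi> (Suc i)) \<in> trans (Kn n 1 :: (nat,'ap) kripke)" using assms unfolding is_path_def by blast
  show ?case
  proof (cases "i < n")
    case True
    then have "\<pi> i = Suc i" using Suc by simp
    then show ?thesis using t True by auto
  next
    case False
    then have "\<pi> i = Suc n" using Suc by simp
    then show ?thesis using t False by auto
  qed
qed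

lemma lin1: "lin_models (Kn n 1 :: (nat,'ap) kripke) psi"
  unfolding lin_models_def
proof (intro allI impI)
  fix \<pi> i assume a: "is_path (Kn n 1 :: (nat,'ap) kripke) \<pi> \<and> \<pi> 0 = init (Kn n 1 :: (nat,'ap) kripke)"
  then have a1: "is_path (Kn n 1 :: (nat,'ap) kripke) \<pi>" "\<pi> 0 = 1" by simp_all
  have p: "\<And>j. \<pi> j = min (Suc j) (Suc n)" using path1[OF a1] by blast
  have "lin_holds (Kn n 1 :: (nat,'ap) kripke) \<pi> 0 (i + n + 1) (DiaE (Prop undefined))"
    using p by (auto intro!: exI[of _ "i + n + 1"])
  then show "lin_holds (Kn n 1 :: (nat,'ap) kripke) \<pi> 0 i psi" unfolding psi_def
    by (auto intro!: exI[of _ "i + n + 1"])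
qed

lemma part_st:
  "\<exists>\<psi> :: ('ap::finite) hs. \<not> (\<exists>\<phi>. \<forall>K :: (nat, 'ap) kripke.
            kripke K \<and> finite (states K) \<longrightarrow> (st_models K \<phi> \<longleftrightarrow> lin_models K \<psi>))"
proof (intro exI[of _ psi] notI)
  assume "\<exists>\<phi>. \<forall>K :: (nat, 'ap) kripke. kripke K \<and> finite (states K) \<longrightarrow> (st_models K \<phi> \<longleftrightarrow> lin_models K psi)"
  then obtain \<phi> where h: "\<forall>K :: (nat, 'ap) kripke. kripke K \<and> finite (states K) \<longrightarrow> (st_models K \<phi> \<longleftrightarrow> lin_models K psi)" by blast
  define n where "n = 2 * thr (dep \<phi>)"
  have "st_models (Kn n 0 :: (nat,'ap) kripke) \<phi> = lin_models (Kn n 0 :: (nat,'ap) kripke) psi"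
    using h Kn_kripke[of 0 n] by auto
  moreover have "st_models (Kn n 1 :: (nat,'ap) kripke) \<phi> = lin_models (Kn n 1 :: (nat,'ap) kripke) psi"
    using h Kn_kripke[of 1 n] by auto
  ultimately show False using st_same[OF n_def] lin0 lin1 by blast
qed

definition nodes :: "'s list \<Rightarrow> nat \<Rightarrow> 's list list" where
  "nodes \<tau> x = map (\<lambda>i. take (Suc i) \<tau>) [x..<length \<tau>]"

lemma length_nodes[simp]: "length (nodes \<tau> x) = length \<tau> - x"
  by (simp add: nodes_def)

lemma last_take_Suc: "i < length \<tau> \<Longrightarrow> last (take (Suc i) \<tau>) = \<tau> ! i"
  by (simp add: take_Suc_conv_app_nth)

lemma initial_trace_take:
  assumes "initial_trace K \<tau>" "1 \<le> j" shows "initial_trace K (take j \<tau>)"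
proof -
  have ne: "\<tau> \<noteq> []" using assms unfolding initial_trace_def is_trace_def by simp
  have "take j \<tau> \<noteq> []" using ne assms(2) by simp
  moreover have "set (take j \<tau>) \<subseteq> states K" using assms set_take_subset
    unfolding initial_trace_def is_trace_def by fast
  moreover have "\<forall>i. Suc i < length (take j \<tau>) \<longrightarrow> (take j \<tau> ! i, take j \<tau> ! Suc i) \<in> trans K"
    using assms unfolding initial_trace_def is_trace_def by auto
  moreover have "hd (take j \<tau>) = hd \<tau>" using ne assms(2) by (cases \<tau>; cases j) auto
  ultimately show ?thesis using assms unfolding initial_trace_def is_trace_def by simp
qed

lemma ct_trace_nodes:
  assumes "initial_trace K \<tau>" "x < length \<tau>"
  shows "is_trace (comp_tree K) (nodes \<tau> x)"
  unfolding is_trace_def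
proof (intro conjI allI impI)
  have "length (nodes \<tau> x) > 0" using assms(2) by simp
  then show "nodes \<tau> x \<noteq> []" by (metis less_irrefl list.size(3))
  show "set (nodes \<tau> x) \<subseteq> states (comp_tree K)"
    using initial_trace_take[OF assms(1)] by (auto simp: nodes_def comp_tree_def)
  fix i assume i: "Suc i < length (nodes \<tau> x)"
  then have i2: "Suc (x + i) < length \<tau>" by simp
  have a: "nodes \<tau> x ! i = take (Suc (x + i)) \<tau>" "nodes \<tau> x ! Suc i = take (Suc (Suc (x + i))) \<tau>"
    using i by (simp_all add: nodes_def)
  have b: "take (Suc (Suc (x + i))) \<tau> = take (Suc (x + i)) \<tau> @ [\<tau> ! Suc (x + i)]"
    using i2 by (simp add: take_Suc_conv_app_nth)
  have c: "last (take (Suc (x + i)) \<tau>) = \<tau> ! (x + i)" using i2 by (simp add: last_take_Suc)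
  have d: "(\<tau> ! (x + i), \<tau> ! Suc (x + i)) \<in> trans K" using assms(1) i2 unfolding initial_trace_def is_trace_def by blast
  have e: "initial_trace K (take (Suc (x + i)) \<tau>)" using initial_trace_take[OF assms(1)] by simp
  show "(nodes \<tau> x ! i, nodes \<tau> x ! Suc i) \<in> trans (comp_tree K)"
    unfolding a b comp_tree_def using c d e by auto
qed

lemma chain_prefix:
  assumes "\<forall>i. Suc i < length L \<longrightarrow> (\<exists>s. L ! Suc i = L ! i @ [s])"
  shows "j + d < length L \<Longrightarrow> \<exists>ys. L ! (j + d) = L ! j @ ys \<and> length ys = d"
proof (induction d)
  case 0 then show ?case by simp
next
  case (Suc d)
  then obtain ys where ys: "L ! (j + d) = L ! j @ ys" "length ys = d" by auto
  obtain s where "L ! Suc (j + d) = L ! (j + d) @ [s]" using assms Suc.prems by auto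
  then show ?case using ys by (intro exI[of _ "ys @ [s]"]) simp
qed

lemma ct_trace_char:
  assumes "is_trace (comp_tree K) L"
  shows "\<exists>\<tau> x. initial_trace K \<tau> \<and> x < length \<tau> \<and> L = nodes \<tau> x"
proof -
  have ne: "L \<noteq> []" using assms by (simp add: is_trace_def)
  have sL: "set L \<subseteq> states (comp_tree K)" using assms unfolding is_trace_def by blast
  have init: "\<And>i. i < length L \<Longrightarrow> initial_trace K (L ! i)"
  proof -
    fix i assume "i < length L"
    then have "L ! i \<in> set L" by (rule nth_mem)
    then show "initial_trace K (L ! i)" using sL by (auto simp: comp_tree_def)
  qed
  have step: "\<forall>i. Suc i < length L \<longrightarrow> (\<exists>s. L ! Suc i = L ! i @ [s])"
    using assms unfolding is_trace_def comp_tree_def by auto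
  define \<tau> where "\<tau> = last L"
  define h where "h = length (L ! 0)"
  have h1: "h \<ge> 1" using init[of 0] ne unfolding h_def initial_trace_def is_trace_def by (cases "L ! 0") auto
  have lenj: "\<And>j. j < length L \<Longrightarrow> length (L ! j) = h + j"
    using chain_prefix[OF step, of 0] unfolding h_def by fastforce
  have pre: "\<And>j. j < length L \<Longrightarrow> L ! j = take (h + j) \<tau>"
  proof -
    fix j assume j: "j < length L"
    have jj: "j + (length L - 1 - j) < length L" using j by simp
    obtain ys where "L ! (j + (length L - 1 - j)) = L ! j @ ys"
      using chain_prefix[OF step jj] by blast
    moreover have "j + (length L - 1 - j) = length L - 1" using j by simp
    ultimately have "\<tau> = L ! j @ ys" unfolding \<tau>_def using ne by (simp add: last_conv_nth)
    then show "L ! j = take (h + j) \<tau>" using lenj[OF j] by simp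
  qed
  have lt: "length \<tau> = h + (length L - 1)" unfolding \<tau>_def using lenj[of "length L - 1"] ne by (simp add: last_conv_nth)
  have "L = nodes \<tau> (h - 1)"
  proof (rule nth_equalityI)
    show "length L = length (nodes \<tau> (h - 1))" using lt h1 ne by simp
    fix i assume "i < length L"
    then show "L ! i = nodes \<tau> (h - 1) ! i" using pre[of i] lt h1 by (simp add: nodes_def)
  qed
  moreover have "initial_trace K \<tau>" unfolding \<tau>_def using init[of "length L - 1"] ne by (simp add: last_conv_nth)
  moreover have "h - 1 < length \<tau>" using lt h1 by simp
  ultimately show ?thesis by blast
qed

lemma take_nodes:
  assumes "1 \<le> i" "i \<le> length \<tau> - x"
  shows "take i (nodes \<tau> x) = nodes (take (x + i) \<tau>) x"
proof -
  have l: "length (take (x + i) \<tau>) = x + i" using assms by simp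
  have "take i (nodes \<tau> x) = map (\<lambda>j. take (Suc j) \<tau>) (take i [x..<length \<tau>])"
    by (simp add: nodes_def take_map)
  also have "take i [x..<length \<tau>] = [x..<x + i]" using assms by simp
  also have "map (\<lambda>j. take (Suc j) \<tau>) [x..<x + i] = map (\<lambda>j. take (Suc j) (take (x + i) \<tau>)) [x..<x + i]"
    by (intro map_cong) (auto simp: min_def)
  also have "\<dots> = nodes (take (x + i) \<tau>) x" unfolding nodes_def l ..
  finally show ?thesis .
qed

lemma drop_nodes: "drop i (nodes \<tau> x) = nodes \<tau> (x + i)"
  by (simp add: nodes_def drop_map)

lemma nodes_inj:
  assumes "x < length \<tau>" "x' < length \<tau>'" "nodes \<tau> x = nodes \<tau>' x'"
  shows "\<tau> = \<tau>' \<and> x = x'"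
proof -
  have l: "length \<tau> - x = length \<tau>' - x'" using assms(3) length_nodes by metis
  have "nodes \<tau> x ! 0 = take (Suc x) \<tau>" "nodes \<tau>' x' ! 0 = take (Suc x') \<tau>'"
    using assms(1,2) by (simp_all add: nodes_def)
  then have "take (Suc x) \<tau> = take (Suc x') \<tau>'" using assms(3) by metis
  then have xx: "x = x'" using assms by (metis Suc_le_eq length_take min.absorb2 nat.inject)
  have "nodes \<tau> x ! (length \<tau> - x - 1) = take (length \<tau>) \<tau>"
    using assms(1) by (simp add: nodes_def)
  moreover have "nodes \<tau>' x' ! (length \<tau>' - x' - 1) = take (length \<tau>') \<tau>'"
    using assms(2) by (simp add: nodes_def)
  ultimately have "\<tau> = \<tau>'" using assms(3) l by simp
  then show ?thesis using xx by simp
qed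

lemma ct_prop:
  assumes "x < length \<tau>"
  shows "st_holds (comp_tree K) (nodes \<tau> x) (Prop p) = (\<forall>i. x \<le> i \<and> i < length \<tau> \<longrightarrow> p \<in> label K (\<tau> ! i))"
proof -
  have "\<And>i. i < length \<tau> \<Longrightarrow> last (take (Suc i) \<tau>) = \<tau> ! i" by (simp add: last_take_Suc)
  then show ?thesis by (auto simp: nodes_def comp_tree_def)
qed

lemma ct_models_char:
  "ct_models K \<phi> = (\<forall>\<tau>. initial_trace K \<tau> \<longrightarrow> st_holds (comp_tree K) (nodes \<tau> 0) \<phi>)"
proof
  assume a: "ct_models K \<phi>"
  show "\<forall>\<tau>. initial_trace K \<tau> \<longrightarrow> st_holds (comp_tree K) (nodes \<tau> 0) \<phi>"
  proof (intro allI impI)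
    fix \<tau> assume t: "initial_trace K \<tau>"
    then have ne: "\<tau> \<noteq> []" unfolding initial_trace_def is_trace_def by simp
    have "is_trace (comp_tree K) (nodes \<tau> 0)" using ct_trace_nodes[OF t] ne by simp
    moreover have "hd (nodes \<tau> 0) = [init K]"
    proof -
      have "hd (nodes \<tau> 0) = take (Suc 0) \<tau>" using ne by (simp add: nodes_def hd_map)
      also have "\<dots> = [hd \<tau>]" using ne by (cases \<tau>) auto
      finally show ?thesis using t unfolding initial_trace_def by simp
    qed
    ultimately show "st_holds (comp_tree K) (nodes \<tau> 0) \<phi>"
      using a unfolding ct_models_def st_models_def initial_trace_def by (simp add: comp_tree_def)
  qed
next
  assume a: "\<forall>\<tau>. initial_trace K \<tau> \<longrightarrow> st_holds (comp_tree K) (nodes \<tau> 0) \<phi>"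
  show "ct_models K \<phi>" unfolding ct_models_def st_models_def
  proof (intro allI impI)
    fix L assume L: "initial_trace (comp_tree K) L"
    then obtain \<tau> x where t: "initial_trace K \<tau>" "x < length \<tau>" "L = nodes \<tau> x"
      using ct_trace_char unfolding initial_trace_def by blast
    have "hd L = take (Suc x) \<tau>" using t by (simp add: nodes_def upt_conv_Cons)
    moreover have "hd L = [init K]" using L unfolding initial_trace_def by (simp add: comp_tree_def)
    ultimately have "x = 0" using t(2) by (metis length_Cons length_take list.size(3) min.absorb2 Suc_le_eq nat.inject)
    then show "st_holds (comp_tree K) L \<phi>" using a t by simp
  qed
qed

type_synonym cst = "nat \<times> nat \<times> ty"

fun full :: "cst \<Rightarrow> ty" where "full (xa, xb, ia, R, ib) = (xa + ia, R, xb + ib)"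
fun cx :: "cst \<Rightarrow> nat" where "cx (xa, xb, \<tau>3) = xa + xb"
fun cl :: "cst \<Rightarrow> nat" where "cl (xa, xb, \<tau>3) = tlen \<tau>3"
fun c3 :: "cst \<Rightarrow> ty" where "c3 (xa, xb, \<tau>3) = \<tau>3"
fun cext :: "cst \<Rightarrow> ty \<Rightarrow> cst" where "cext (xa, xb, \<tau>3) \<sigma> = (xa, xb, \<sigma>)"
fun cpre :: "nat \<Rightarrow> cst \<Rightarrow> nat \<Rightarrow> cst" where "cpre n (xa, xb, \<tau>3) i = (xa, xb, prefixtype n \<tau>3 i)"
fun cvalid :: "nat \<Rightarrow> cst \<Rightarrow> bool" where "cvalid n (xa, xb, \<tau>3) = (valid n \<tau>3 \<and> (0 < xb \<longrightarrow> fst \<tau>3 = 0))"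
fun cE :: "cst \<Rightarrow> nat \<Rightarrow> cst" where
  "cE (xa, xb, ia, R, ib) i = (if i < ia then (xa + i, 0, ia - i, R, ib) else (xa + ia, xb + (i - ia), 0, 0, ib - (i - ia)))"
fun cEb :: "cst \<Rightarrow> nat \<Rightarrow> cst" where
  "cEb (xa, xb, ia, R, ib) j = (if j \<le> xb then (xa, xb - j, 0, 0, ib + j) else (xa - (j - xb), 0, ia + (j - xb), R, ib + xb))"

primrec csem :: "nat \<Rightarrow> 'ap hs \<Rightarrow> cst \<Rightarrow> bool" where
  "csem n (Prop p) C = (fst (c3 C) = 0)"
| "csem n (Neg \<psi>) C = (\<not> csem n \<psi> C)"
| "csem n (Conj \<psi> \<chi>) C = (csem n \<psi> C \<and> csem n \<chi> C)"
| "csem n (DiaB \<psi>) C = (\<exists>i. 1 \<le> i \<and> i < cl C \<and> csem n \<psi> (cpre n C i))"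
| "csem n (DiaE \<psi>) C = (\<exists>i. 1 \<le> i \<and> i < cl C \<and> csem n \<psi> (cE C i))"
| "csem n (DiaBbar \<psi>) C = (\<exists>\<sigma>. valid n \<sigma> \<and> cl C < tlen \<sigma> \<and> prefixtype n \<sigma> (cl C) = c3 C \<and> csem n \<psi> (cext C \<sigma>))"
| "csem n (DiaEbar \<psi>) C = (\<exists>j. 1 \<le> j \<and> j \<le> cx C \<and> csem n \<psi> (cEb C j))"

lemma cst_cases: obtains xa xb ia R ib where "C = (xa, xb, ia, R, ib)"
  using prod_cases5 by blast

lemma H1: "cvalid n C \<Longrightarrow> valid n (full C)"
  by (cases C rule: cst_cases) auto

lemma H2: "cvalid n C \<Longrightarrow> cx C < tlen (full C) \<and> tlen (full C) - cx C = cl C"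
  by (cases C rule: cst_cases) auto

lemma H3: "(0 < xb \<longrightarrow> fst \<sigma>3 = 0) \<Longrightarrow> 1 \<le> z \<Longrightarrow>
   prefixtype n (full (xa, xb, \<sigma>3)) (xa + xb + z) = full (xa, xb, prefixtype n \<sigma>3 z)"
  by (cases \<sigma>3) auto

lemma H4: "cvalid n C \<Longrightarrow> i < cl C \<Longrightarrow> full (cE C i) = full C \<and> cx (cE C i) = cx C + i \<and> cvalid n (cE C i) \<and> cl (cE C i) = cl C - i"
  by (cases C rule: cst_cases) auto

lemma H5: "cvalid n C \<Longrightarrow> 1 \<le> j \<Longrightarrow> j \<le> cx C \<Longrightarrow> full (cEb C j) = full C \<and> cx (cEb C j) = cx C - j \<and> cvalid n (cEb C j)"
  by (cases C rule: cst_cases) auto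

lemma H6: "cvalid n C \<Longrightarrow> 1 \<le> i \<Longrightarrow> i \<le> cl C \<Longrightarrow>
   cvalid n (cpre n C i) \<and> full (cpre n C i) = prefixtype n (full C) (cx C + i) \<and> cx (cpre n C i) = cx C \<and> cl (cpre n C i) = i"
proof (cases C rule: cst_cases)
  case (1 xa xb ia R ib)
  assume a: "cvalid n C" "1 \<le> i" "i \<le> cl C"
  have f: "0 < xb \<longrightarrow> fst (ia, R, ib) = 0" using a 1 by simp
  show ?thesis using a 1 H3[OF f a(2), of n xa] valid_prefix[of n "(ia,R,ib)" i] tlen_prefix[of i "(ia,R,ib)" n]
    by (auto simp del: prefixtype.simps full.simps) (auto)
qed

lemma fst_ext: "prefixtype n \<sigma> l = \<tau> \<Longrightarrow> fst \<tau> = 0 \<Longrightarrow> 1 \<le> l \<Longrightarrow> fst \<sigma> = 0"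
  by (cases \<sigma>) (auto split: if_splits)

lemma H7a:
  assumes c: "cvalid n C" and s: "valid n \<sigma>" "cl C < tlen \<sigma>" "prefixtype n \<sigma> (cl C) = c3 C"
  shows "cvalid n (cext C \<sigma>) \<and> valid n (full (cext C \<sigma>)) \<and> tlen (full C) < tlen (full (cext C \<sigma>))
     \<and> prefixtype n (full (cext C \<sigma>)) (tlen (full C)) = full C"
proof (cases C rule: cst_cases)
  case (1 xa xb ia R ib)
  have l1: "1 \<le> cl C" using c 1 by simp
  have f: "0 < xb \<longrightarrow> fst \<sigma> = 0" using fst_ext[OF s(3)] c 1 l1 by auto
  have cv: "cvalid n (cext C \<sigma>)" using f s 1 by simp
  have "prefixtype n (full (xa, xb, \<sigma>)) (xa + xb + cl C) = full (xa, xb, prefixtype n \<sigma> (cl C))"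
    using H3[OF f l1] .
  moreover have "xa + xb + (ia + ib) = xa + ia + (xb + ib)" by simp
  ultimately have "prefixtype n (full (cext C \<sigma>)) (tlen (full C)) = full C" using 1 s(3) by simp
  moreover have "tlen (full C) < tlen (full (cext C \<sigma>))" using 1 s by (cases \<sigma>) auto
  ultimately show ?thesis using cv H1[OF cv] by blast
qed

lemma H7b:
  assumes c: "cvalid n C" and s: "valid n \<sigma>F" "tlen (full C) < tlen \<sigma>F" "prefixtype n \<sigma>F (tlen (full C)) = full C"
  shows "\<exists>\<sigma>. valid n \<sigma> \<and> cl C < tlen \<sigma> \<and> prefixtype n \<sigma> (cl C) = c3 C \<and> \<sigma>F = full (cext C \<sigma>)"
proof -
  obtain xa xb ia R ib where e: "C = (xa, xb, ia, R, ib)" by (rule cst_cases)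
  obtain K S M where f: "\<sigma>F = (K, S, M)" by (cases \<sigma>F)
  have cv: "ia + ib \<ge> 1" "R \<le> n" "0 < ib \<longrightarrow> R = 0" "ia = 0 \<longrightarrow> R = 0" "0 < xb \<longrightarrow> ia = 0" using c e by auto
  have vF: "K + M \<ge> 1" "S \<le> n" "0 < M \<longrightarrow> S = 0" "K = 0 \<longrightarrow> S = 0" using s f by auto
  have lt: "xa + ia + xb + ib < K + M" using s e f by simp
  show ?thesis
  proof (cases "xa + ia + (xb + ib) \<le> K")
    case True
    then have eq: "xa + ia = xa + ia" "R = min n (S + (K - (xa + ia + (xb + ib))))" "xb + ib = 0"
      using s(3) e f by auto
    define \<sigma> where "\<sigma> = (K - xa, S, M)"
    have a: "valid n \<sigma>" unfolding \<sigma>_def using vF lt True eq by auto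
    have b: "cl C < tlen \<sigma>" unfolding \<sigma>_def using e lt eq True by simp
    have d: "prefixtype n \<sigma> (cl C) = c3 C" unfolding \<sigma>_def using e eq True by auto
    have g: "\<sigma>F = full (cext C \<sigma>)" unfolding \<sigma>_def using e f eq True by auto
    show ?thesis using a b d g by blast
  next
    case False
    then have eq: "K = xa + ia" "S = R" "xa + ia + (xb + ib) - K = xb + ib"
      using s(3) e f by (auto split: if_splits)
    have Mx: "M > xb + ib" using lt eq by simp
    define \<sigma> where "\<sigma> = (ia, R, M - xb)"
    have a: "valid n \<sigma>" unfolding \<sigma>_def using vF cv Mx eq by auto
    have b: "cl C < tlen \<sigma>" unfolding \<sigma>_def using e Mx by simp
    have d: "prefixtype n \<sigma> (cl C) = c3 C" unfolding \<sigma>_def using e cv Mx by (cases "ib = 0") (auto simp: min_def)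
    have g: "\<sigma>F = full (cext C \<sigma>)" unfolding \<sigma>_def using e f eq Mx by auto
    show ?thesis using a b d g by blast
  qed
qed

lemma H8:
  assumes c: "cvalid n C"
  shows "(\<forall>i. cx C \<le> i \<and> i < tlen (full C) \<longrightarrow> p \<in> label (Kn n s0) (tr n (full C) ! i)) = (fst (c3 C) = 0)"
proof -
  obtain xa xb ia R ib where e: "C = (xa, xb, ia, R, ib)" by (rule cst_cases)
  have cv: "0 < xb \<longrightarrow> ia = 0" using c e by auto
  have nth: "\<And>i. i < xa + ia + (xb + ib) \<Longrightarrow> tr n (xa + ia, R, xb + ib) ! i = (if i < xa + ia then (n - R + 1 + i) - (xa + ia) else Suc n)"
    by (rule tr_nth)
  show ?thesis
  proof
    assume a: "\<forall>i. cx C \<le> i \<and> i < tlen (full C) \<longrightarrow> p \<in> label (Kn n s0) (tr n (full C) ! i)"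
    show "fst (c3 C) = 0"
    proof (rule ccontr)
      assume "fst (c3 C) \<noteq> 0"
      then have ia: "ia > 0" "xb = 0" using e cv by auto
      have "p \<in> label (Kn n s0) (tr n (full C) ! xa)" using a e ia by simp
      moreover have "tr n (full C) ! xa \<le> n" using nth[of xa] e ia by simp
      ultimately show False by (simp split: if_splits)
    qed
  next
    assume "fst (c3 C) = 0"
    then have "ia = 0" using e by simp
    then show "\<forall>i. cx C \<le> i \<and> i < tlen (full C) \<longrightarrow> p \<in> label (Kn n s0) (tr n (full C) ! i)"
      using e nth by auto
  qed
qed

lemma cx_cext[simp]: "cx (cext C \<sigma>) = cx C"
  by (cases C rule: cst_cases) auto

lemma init_full:
  assumes "cvalid n C" "hd (tr n (full C)) = s0"
  shows "initial_trace (Kn n s0 :: (nat,'ap) kripke) (tr n (full C))"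
  using tr_trace[OF H1[OF assms(1)]] assms(2) unfolding initial_trace_def by simp

lemma ct_red:
  assumes "cvalid n C" "hd (tr n (full C)) = s0"
  shows "st_holds (comp_tree (Kn n s0 :: (nat,'ap) kripke)) (nodes (tr n (full C)) (cx C)) \<phi> = csem n \<phi> C"
  using assms
proof (induction \<phi> arbitrary: C)
  case (Prop p)
  have x: "cx C < length (tr n (full C))" using H2[OF Prop.prems(1)] by simp
  have a: "st_holds (comp_tree (Kn n s0 :: (nat,'ap) kripke)) (nodes (tr n (full C)) (cx C)) (Prop p) =
    (\<forall>i. cx C \<le> i \<and> i < length (tr n (full C)) \<longrightarrow> p \<in> label (Kn n s0 :: (nat,'ap) kripke) (tr n (full C) ! i))"
    by (rule ct_prop[OF x])
  have b: "(\<forall>i. cx C \<le> i \<and> i < tlen (full C) \<longrightarrow> p \<in> label (Kn n s0 :: (nat,'ap) kripke) (tr n (full C) ! i)) = (fst (c3 C) = 0)"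
    by (rule H8[OF Prop.prems(1)])
  show ?case using a b by (simp only: length_tr csem.simps)
next
  case (Neg \<phi>) then show ?case by simp
next
  case (Conj \<phi>1 \<phi>2) then show ?case by simp
next
  case (DiaB \<phi>)
  note c = DiaB.prems
  have h2: "cx C < tlen (full C)" "tlen (full C) - cx C = cl C" using H2[OF c(1)] by auto
  have step: "take i (nodes (tr n (full C)) (cx C)) = nodes (tr n (full (cpre n C i))) (cx (cpre n C i))
     \<and> cvalid n (cpre n C i) \<and> hd (tr n (full (cpre n C i))) = s0" if i: "1 \<le> i" "i < cl C" for i
  proof -
    have h6: "cvalid n (cpre n C i)" "full (cpre n C i) = prefixtype n (full C) (cx C + i)" "cx (cpre n C i) = cx C"
      using H6[OF c(1) i(1)] i by auto
    have t: "take (cx C + i) (tr n (full C)) = tr n (full (cpre n C i))"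
      using take_tr[of "cx C + i" "full C" n] h6 i h2 by simp
    have "take i (nodes (tr n (full C)) (cx C)) = nodes (take (cx C + i) (tr n (full C))) (cx C)"
      using take_nodes[of i "tr n (full C)" "cx C"] i h2 by simp
    moreover have "hd (tr n (full (cpre n C i))) = s0" using t[symmetric] c(2) i by simp
    ultimately show ?thesis using t h6 by simp
  qed
  have "st_holds (comp_tree (Kn n s0 :: (nat,'ap) kripke)) (nodes (tr n (full C)) (cx C)) (DiaB \<phi>) =
     (\<exists>i. 1 \<le> i \<and> i < cl C \<and> st_holds (comp_tree (Kn n s0 :: (nat,'ap) kripke)) (take i (nodes (tr n (full C)) (cx C))) \<phi>)"
    using h2 by simp
  also have "\<dots> = (\<exists>i. 1 \<le> i \<and> i < cl C \<and> csem n \<phi> (cpre n C i))"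
    using step DiaB.IH by metis
  finally show ?case by simp
next
  case (DiaE \<phi>)
  note c = DiaE.prems
  have h2: "cx C < tlen (full C)" "tlen (full C) - cx C = cl C" using H2[OF c(1)] by auto
  have step: "drop i (nodes (tr n (full C)) (cx C)) = nodes (tr n (full (cE C i))) (cx (cE C i))
     \<and> cvalid n (cE C i) \<and> hd (tr n (full (cE C i))) = s0" if i: "1 \<le> i" "i < cl C" for i
    using H4[OF c(1) i(2)] drop_nodes c(2) by simp
  have "st_holds (comp_tree (Kn n s0 :: (nat,'ap) kripke)) (nodes (tr n (full C)) (cx C)) (DiaE \<phi>) =
     (\<exists>i. 1 \<le> i \<and> i < cl C \<and> st_holds (comp_tree (Kn n s0 :: (nat,'ap) kripke)) (drop i (nodes (tr n (full C)) (cx C))) \<phi>)"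
    using h2 by simp
  also have "\<dots> = (\<exists>i. 1 \<le> i \<and> i < cl C \<and> csem n \<phi> (cE C i))"
    using step DiaE.IH by metis
  finally show ?case by simp
next
  case (DiaBbar \<phi>)
  note c = DiaBbar.prems
  have h2: "cx C < tlen (full C)" "tlen (full C) - cx C = cl C" using H2[OF c(1)] by auto
  have l1: "1 \<le> cl C" using h2 by simp
  show ?case
  proof
    assume "st_holds (comp_tree (Kn n s0 :: (nat,'ap) kripke)) (nodes (tr n (full C)) (cx C)) (DiaBbar \<phi>)"
    then obtain L where L: "is_trace (comp_tree (Kn n s0 :: (nat,'ap) kripke)) L" "cl C < length L"
      "take (cl C) L = nodes (tr n (full C)) (cx C)" "st_holds (comp_tree (Kn n s0 :: (nat,'ap) kripke)) L \<phi>"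
      using h2 by auto
    obtain \<tau>' x' where t': "initial_trace (Kn n s0 :: (nat,'ap) kripke) \<tau>'" "x' < length \<tau>'" "L = nodes \<tau>' x'"
      using ct_trace_char[OF L(1)] by blast
    have tk: "take (cl C) L = nodes (take (x' + cl C) \<tau>') x'"
      using take_nodes[of "cl C" \<tau>' x'] t' L(2) l1 by simp
    have p1: "x' < length (take (x' + cl C) \<tau>')" using t' L(2) l1 by simp
    have p2: "cx C < length (tr n (full C))" using h2 by simp
    have p3: "nodes (take (x' + cl C) \<tau>') x' = nodes (tr n (full C)) (cx C)" using tk L(3) by simp
    have "take (x' + cl C) \<tau>' = tr n (full C) \<and> x' = cx C"
      using nodes_inj[OF p1 p2 p3] .
    then have A: "take (x' + cl C) \<tau>' = tr n (full C)" and B: "x' = cx C" by auto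
    have tl: "tlen (full C) = x' + cl C" using h2 B by simp
    have e1: "take (tlen (full C)) \<tau>' = tr n (full C)" "x' = cx C" using A B tl by (simp only:)+
    obtain \<sigma>F where sF: "valid n \<sigma>F" "\<tau>' = tr n \<sigma>F" using trace_tr t'(1) unfolding initial_trace_def by blast
    have lt: "tlen (full C) < tlen \<sigma>F" using L(2) t' sF e1 h2 by simp
    have "tr n (prefixtype n \<sigma>F (tlen (full C))) = tr n (full C)"
      using take_tr[of "tlen (full C)" \<sigma>F n] e1 sF lt h2 by simp
    then have pF: "prefixtype n \<sigma>F (tlen (full C)) = full C"
      using tr_inj valid_prefix[OF sF(1), of "tlen (full C)"] H1[OF c(1)] lt h2 by simp
    obtain \<sigma> where s: "valid n \<sigma>" "cl C < tlen \<sigma>" "prefixtype n \<sigma> (cl C) = c3 C" "\<sigma>F = full (cext C \<sigma>)"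
      using H7b[OF c(1) sF(1) lt pF] by blast
    have cv: "cvalid n (cext C \<sigma>)" using H7a[OF c(1) s(1-3)] by blast
    have hd: "hd (tr n (full (cext C \<sigma>))) = s0" using t'(1) sF s(4) unfolding initial_trace_def by simp
    have "csem n \<phi> (cext C \<sigma>)" using DiaBbar.IH[OF cv hd] L(4) t'(3) e1 sF s(4) by simp
    then show "csem n (DiaBbar \<phi>) C" using s unfolding csem.simps by blast
  next
    assume "csem n (DiaBbar \<phi>) C"
    then obtain \<sigma> where s: "valid n \<sigma>" "cl C < tlen \<sigma>" "prefixtype n \<sigma> (cl C) = c3 C" "csem n \<phi> (cext C \<sigma>)"
      unfolding csem.simps by blast
    have a: "cvalid n (cext C \<sigma>)" "valid n (full (cext C \<sigma>))" "tlen (full C) < tlen (full (cext C \<sigma>))"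
      "prefixtype n (full (cext C \<sigma>)) (tlen (full C)) = full C"
      using H7a[OF c(1) s(1-3)] by auto
    define \<sigma>F where "\<sigma>F = full (cext C \<sigma>)"
    have tk: "take (tlen (full C)) (tr n \<sigma>F) = tr n (full C)"
      using take_tr[of "tlen (full C)" \<sigma>F n] a h2 unfolding \<sigma>F_def by simp
    have hd: "hd (tr n \<sigma>F) = s0"
    proof -
      have "hd (tr n \<sigma>F) = hd (take (tlen (full C)) (tr n \<sigma>F))" using h2 by simp
      then show ?thesis using tk c(2) by simp
    qed
    have it: "initial_trace (Kn n s0 :: (nat,'ap) kripke) (tr n \<sigma>F)"
      using tr_trace[OF a(2)] hd unfolding initial_trace_def \<sigma>F_def by simp
    have xl: "cx C < length (tr n \<sigma>F)" using a h2 unfolding \<sigma>F_def by simp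
    have T: "is_trace (comp_tree (Kn n s0 :: (nat,'ap) kripke)) (nodes (tr n \<sigma>F) (cx C))"
      using ct_trace_nodes[OF it xl] .
    have len: "cl C < length (nodes (tr n \<sigma>F) (cx C))" using a h2 unfolding \<sigma>F_def by simp
    have tk2: "take (cl C) (nodes (tr n \<sigma>F) (cx C)) = nodes (tr n (full C)) (cx C)"
    proof -
      have tl2: "cx C + cl C = tlen (full C)" using h2 by simp
      show ?thesis using take_nodes[of "cl C" "tr n \<sigma>F" "cx C"] l1 len tk unfolding tl2 by simp
    qed
    have "st_holds (comp_tree (Kn n s0 :: (nat,'ap) kripke)) (nodes (tr n \<sigma>F) (cx C)) \<phi>"
      using DiaBbar.IH[OF a(1)] hd s(4) unfolding \<sigma>F_def by simp
    then show "st_holds (comp_tree (Kn n s0 :: (nat,'ap) kripke)) (nodes (tr n (full C)) (cx C)) (DiaBbar \<phi>)"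
      using T len tk2 h2 unfolding st_holds.simps length_nodes length_tr
      by (intro exI[of _ "nodes (tr n \<sigma>F) (cx C)"]) simp
  qed
next
  case (DiaEbar \<phi>)
  note c = DiaEbar.prems
  have h2: "cx C < tlen (full C)" "tlen (full C) - cx C = cl C" using H2[OF c(1)] by auto
  have l1: "1 \<le> cl C" using h2 by simp
  show ?case
  proof
    assume "st_holds (comp_tree (Kn n s0 :: (nat,'ap) kripke)) (nodes (tr n (full C)) (cx C)) (DiaEbar \<phi>)"
    then obtain L where L: "is_trace (comp_tree (Kn n s0 :: (nat,'ap) kripke)) L" "cl C < length L"
      "drop (length L - cl C) L = nodes (tr n (full C)) (cx C)" "st_holds (comp_tree (Kn n s0 :: (nat,'ap) kripke)) L \<phi>"
      using h2 by auto
    obtain \<tau>' x' where t': "initial_trace (Kn n s0 :: (nat,'ap) kripke) \<tau>'" "x' < length \<tau>'" "L = nodes \<tau>' x'"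
      using ct_trace_char[OF L(1)] by blast
    define d where "d = length L - cl C"
    have d1: "1 \<le> d" using L(2) unfolding d_def by simp
    have dr: "drop d L = nodes \<tau>' (x' + d)" using t' drop_nodes by simp
    have p1: "x' + d < length \<tau>'" using t' L(2) l1 unfolding d_def by simp
    have p2: "cx C < length (tr n (full C))" using h2 by simp
    have p3: "nodes \<tau>' (x' + d) = nodes (tr n (full C)) (cx C)" using dr L(3) unfolding d_def by simp
    have "\<tau>' = tr n (full C) \<and> x' + d = cx C"
      using nodes_inj[OF p1 p2 p3] .
    then have e1: "\<tau>' = tr n (full C)" "x' = cx C - d" "d \<le> cx C" by auto
    have h5: "full (cEb C d) = full C" "cx (cEb C d) = cx C - d" "cvalid n (cEb C d)"
      using H5[OF c(1) d1 e1(3)] by auto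
    have "csem n \<phi> (cEb C d)" using DiaEbar.IH[OF h5(3)] h5 c(2) L(4) t'(3) e1 by simp
    then show "csem n (DiaEbar \<phi>) C" using d1 e1 unfolding csem.simps by blast
  next
    assume "csem n (DiaEbar \<phi>) C"
    then obtain j where j: "1 \<le> j" "j \<le> cx C" "csem n \<phi> (cEb C j)" unfolding csem.simps by blast
    have h5: "full (cEb C j) = full C" "cx (cEb C j) = cx C - j" "cvalid n (cEb C j)"
      using H5[OF c(1) j(1,2)] by auto
    have it: "initial_trace (Kn n s0 :: (nat,'ap) kripke) (tr n (full C))" by (rule init_full[OF c])
    have xl: "cx C - j < length (tr n (full C))" using h2 by simp
    have T: "is_trace (comp_tree (Kn n s0 :: (nat,'ap) kripke)) (nodes (tr n (full C)) (cx C - j))"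
      using ct_trace_nodes[OF it xl] .
    have len: "length (nodes (tr n (full C)) (cx C - j)) = cl C + j" using h2 j by simp
    have dr: "drop j (nodes (tr n (full C)) (cx C - j)) = nodes (tr n (full C)) (cx C)"
      using drop_nodes[of j "tr n (full C)" "cx C - j"] j(2) by simp
    have "st_holds (comp_tree (Kn n s0 :: (nat,'ap) kripke)) (nodes (tr n (full C)) (cx C - j)) \<phi>"
      using DiaEbar.IH[OF h5(3)] h5 c(2) j by simp
    then show "st_holds (comp_tree (Kn n s0 :: (nat,'ap) kripke)) (nodes (tr n (full C)) (cx C)) (DiaEbar \<phi>)"
      using T len dr h2 j unfolding st_holds.simps length_nodes length_tr
      by (intro exI[of _ "nodes (tr n (full C)) (cx C - j)"]) simp
  qed
qed

fun crel :: "nat \<Rightarrow> cst \<Rightarrow> cst \<Rightarrow> bool" where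
  "crel T (xa, xb, \<tau>3) (xa', xb', \<tau>3') = (min T xa = min T xa' \<and> min T xb = min T xb' \<and> rel T \<tau>3 \<tau>3')"

lemma crel_sym: "crel T C C' = crel T C' C"
  by (cases C rule: cst_cases; cases C' rule: cst_cases) auto

lemma crel_mono: assumes a: "t \<le> T" and c: "crel T C C'" shows "crel t C C'"
proof -
  obtain xa xb \<tau> where e: "C = (xa, xb, \<tau>)" by (cases C) auto
  obtain xa' xb' \<tau>' where e': "C' = (xa', xb', \<tau>')" by (cases C') auto
  have r: "min T xa = min T xa'" "min T xb = min T xb'" "rel T \<tau> \<tau>'" using c e e' by auto
  show ?thesis using cap_mono[OF a r(1)] cap_mono[OF a r(2)] rel_mono[OF a r(3)] e e' by simp
qed

lemma full0: "full (0, 0, \<tau>) = \<tau>" by (cases \<tau>) simp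
lemma cx0: "cx (0, 0, \<tau>) = 0" by simp
lemma cvalid0: "valid n \<tau> \<Longrightarrow> cvalid n (0, 0, \<tau>)" by (cases \<tau>) simp

lemma cfB:
  assumes c: "cvalid n C" "cvalid n C'" "crel T C C'" and th: "2*t \<le> T" "1 \<le> t" "T \<le> n"
    and i: "1 \<le> i" "i < cl C"
  shows "\<exists>i'. 1 \<le> i' \<and> i' < cl C' \<and> crel t (cpre n C i) (cpre n C' i')"
proof -
  obtain xa xb \<tau> where e: "C = (xa, xb, \<tau>)" by (cases C) auto
  obtain xa' xb' \<tau>' where e': "C' = (xa', xb', \<tau>')" by (cases C') auto
  have tT: "t \<le> T" using th by simp
  have v0: "valid n \<tau>" "valid n \<tau>'" "rel T \<tau> \<tau>'" "min T xa = min T xa'" "min T xb = min T xb'"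
    using c e e' by auto
  have v: "valid n \<tau>" "valid n \<tau>'" "rel T \<tau> \<tau>'" "min t xa = min t xa'" "min t xb = min t xb'"
    using v0 cap_mono[OF tT v0(4)] cap_mono[OF tT v0(5)] by auto
  obtain i' where "1 \<le> i'" "i' < tlen \<tau>'" "rel t (prefixtype n \<tau> i) (prefixtype n \<tau>' i')"
    using gB[OF v(1-3) th i(1)] i e by auto
  then show ?thesis using e e' v by (intro exI[of _ i']) simp
qed

lemma cfBb:
  assumes c: "cvalid n C" "cvalid n C'" "crel T C C'" and th: "2*t \<le> T" "1 \<le> t" "T \<le> n"
    and s: "valid n \<sigma>" "cl C < tlen \<sigma>" "prefixtype n \<sigma> (cl C) = c3 C"
  shows "\<exists>\<sigma>'. valid n \<sigma>' \<and> cl C' < tlen \<sigma>' \<and> prefixtype n \<sigma>' (cl C') = c3 C' \<and> crel t (cext C \<sigma>) (cext C' \<sigma>')"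
proof -
  obtain xa xb \<tau> where e: "C = (xa, xb, \<tau>)" by (cases C) auto
  obtain xa' xb' \<tau>' where e': "C' = (xa', xb', \<tau>')" by (cases C') auto
  have tT: "t \<le> T" using th by simp
  have v0: "valid n \<tau>" "valid n \<tau>'" "rel T \<tau> \<tau>'" "min T xa = min T xa'" "min T xb = min T xb'"
    using c e e' by auto
  have v: "valid n \<tau>" "valid n \<tau>'" "rel T \<tau> \<tau>'" "min t xa = min t xa'" "min t xb = min t xb'"
    using v0 cap_mono[OF tT v0(4)] cap_mono[OF tT v0(5)] by auto
  obtain \<sigma>' where "valid n \<sigma>'" "tlen \<tau>' < tlen \<sigma>'" "prefixtype n \<sigma>' (tlen \<tau>') = \<tau>'" "rel t \<sigma> \<sigma>'"
  proof -
    have s2: "tlen \<tau> < tlen \<sigma>" "prefixtype n \<sigma> (tlen \<tau>) = \<tau>" using s e by simp_all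
    show "(\<And>\<sigma>'. valid n \<sigma>' \<Longrightarrow> tlen \<tau>' < tlen \<sigma>' \<Longrightarrow> prefixtype n \<sigma>' (tlen \<tau>') = \<tau>' \<Longrightarrow> rel t \<sigma> \<sigma>' \<Longrightarrow> thesis) \<Longrightarrow> thesis"
      using gBb[OF v(1-3) th s(1) s2] by blast
  qed
  then show ?thesis using e e' v by (intro exI[of _ \<sigma>']) simp
qed

lemma cfE:
  assumes c: "cvalid n C" "cvalid n C'" "crel T C C'" and th: "2*t \<le> T" "1 \<le> t" "T \<le> n"
    and i: "1 \<le> i" "i < cl C"
  shows "\<exists>i'. 1 \<le> i' \<and> i' < cl C' \<and> crel t (cE C i) (cE C' i')"
proof -
  obtain xa xb ia R ib where e: "C = (xa, xb, ia, R, ib)" by (rule cst_cases)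
  obtain xa' xb' ia' R' ib' where e': "C' = (xa', xb', ia', R', ib')" by (rule cst_cases)
  have tT: "t \<le> T" using th by simp
  have r: "min T xa = min T xa'" "min T xb = min T xb'" "min T ia = min T ia'" "min T R = min T R'" "min T ib = min T ib'"
    using c(3) e e' by auto
  have rt: "min t xa = min t xa'" "min t xb = min t xb'" "min t ia = min t ia'" "min t R = min t R'" "min t ib = min t ib'"
    using r cap_mono[OF tT] by blast+
  have il: "i < ia + ib" using i e by simp
  show ?thesis
  proof (cases "i < ia")
    case True
    obtain i' where i': "i' \<le> ia'" "min t i' = min t i" "min t (ia' - i') = min t (ia - i)"
      using cap_split[OF th(1) r(3)] True by (meson less_imp_le)
    have i1: "1 \<le> i'" using cap_pos[OF th(2) i'(2)] i by simp
    have "ia - i \<noteq> 0" using True by simp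
    then have "ia' - i' \<noteq> 0" using cap_zero[OF th(2) i'(3)] by metis
    then have i2: "i' < ia'" by simp
    have "min t (xa + i) = min t (xa' + i')" using cap_add[OF rt(1) i'(2)[symmetric]] .
    then show ?thesis using i1 i2 i' True e e' rt by (intro exI[of _ i']) simp
  next
    case False
    have mu: "i - ia \<le> ib" using il by simp
    obtain u where u: "u \<le> ib'" "min t u = min t (i - ia)" "min t (ib' - u) = min t (ib - (i - ia))"
      using cap_split[OF th(1) r(5) mu] by blast
    have "ib - (i - ia) \<noteq> 0" using il False by arith
    then have "ib' - u \<noteq> 0" using cap_zero[OF th(2) u(3)] by metis
    then have u2: "u < ib'" by simp
    have i1: "1 \<le> ia' + u"
    proof (cases "ia = 0")
      case True then have "1 \<le> i - ia" using i by simp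
      then show ?thesis using cap_pos[OF th(2) u(2)] by simp
    next
      case False then have "ia' \<noteq> 0" using cap_zero[OF th(2) rt(3)] by metis
      then show ?thesis by simp
    qed
    have a1: "min t (xa + ia) = min t (xa' + ia')" using cap_add[OF rt(1) rt(3)] .
    have a2: "min t (xb + (i - ia)) = min t (xb' + u)" using cap_add[OF rt(2) u(2)[symmetric]] .
    show ?thesis using u u2 i1 False e e' a1 a2
      by (intro exI[of _ "ia' + u"]) simp
  qed
qed

lemma cfEb:
  assumes c: "cvalid n C" "cvalid n C'" "crel T C C'" and th: "2*t \<le> T" "1 \<le> t" "T \<le> n"
    and j: "1 \<le> j" "j \<le> cx C"
  shows "\<exists>j'. 1 \<le> j' \<and> j' \<le> cx C' \<and> crel t (cEb C j) (cEb C' j')"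
proof -
  obtain xa xb ia R ib where e: "C = (xa, xb, ia, R, ib)" by (rule cst_cases)
  obtain xa' xb' ia' R' ib' where e': "C' = (xa', xb', ia', R', ib')" by (rule cst_cases)
  have tT: "t \<le> T" using th by simp
  have r: "min T xa = min T xa'" "min T xb = min T xb'" "min T ia = min T ia'" "min T R = min T R'" "min T ib = min T ib'"
    using c(3) e e' by auto
  have rt: "min t xa = min t xa'" "min t xb = min t xb'" "min t ia = min t ia'" "min t R = min t R'" "min t ib = min t ib'"
    using r cap_mono[OF tT] by blast+
  show ?thesis
  proof (cases "j \<le> xb")
    case True
    obtain j' where j': "j' \<le> xb'" "min t j' = min t j" "min t (xb' - j') = min t (xb - j)"
      using cap_split[OF th(1) r(2) True] by blast
    have j1: "1 \<le> j'" using cap_pos[OF th(2) j'(2)] j by simp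
    have a: "min t (ib + j) = min t (ib' + j')" using cap_add[OF rt(5) j'(2)[symmetric]] .
    show ?thesis using j1 j' True e e' rt a by (intro exI[of _ j']) simp
  next
    case False
    have mu: "j - xb \<le> xa" using j e by simp
    obtain u where u: "u \<le> xa'" "min t u = min t (j - xb)" "min t (xa' - u) = min t (xa - (j - xb))"
      using cap_split[OF th(1) r(1) mu] by blast
    have u1: "1 \<le> u" using cap_pos[OF th(2) u(2)] False by simp
    have a1: "min t (ia + (j - xb)) = min t (ia' + u)" using cap_add[OF rt(3) u(2)[symmetric]] .
    have a2: "min t (ib + xb) = min t (ib' + xb')" using cap_add[OF rt(5) rt(2)] .
    show ?thesis using u u1 False e e' a1 a2 rt
      by (intro exI[of _ "xb' + u"]) simp
  qed
qed

lemma ct_EF: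
  "thr (dep \<phi>) \<le> n \<Longrightarrow> cvalid n C \<Longrightarrow> cvalid n C' \<Longrightarrow> crel (thr (dep \<phi>)) C C' \<Longrightarrow> csem n \<phi> C = csem n \<phi> C'"
proof (induction \<phi> arbitrary: C C')
  case (Prop p)
  obtain xa xb ia R ib where e: "C = (xa, xb, ia, R, ib)" by (rule cst_cases)
  obtain xa' xb' ia' R' ib' where e': "C' = (xa', xb', ia', R', ib')" by (rule cst_cases)
  have "min (thr 0) ia = min (thr 0) ia'" using Prop.prems unfolding e e' by simp
  then have "(ia = 0) = (ia' = 0)" using cap_zero[OF thr_ge1[of 0]] by blast
  then show ?case unfolding e e' by simp
next
  case (Neg \<phi>) then show ?case by simp
next
  case (Conj \<phi>1 \<phi>2)
  have "thr (dep \<phi>1) \<le> thr (dep (Conj \<phi>1 \<phi>2))" "thr (dep \<phi>2) \<le> thr (dep (Conj \<phi>1 \<phi>2))"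
    by (auto intro: thr_mono)
  then show ?case using Conj crel_mono by (metis csem.simps(3) order_trans)
next
  case (DiaB \<phi>)
  define t where "t = thr (dep \<phi>)"
  define T where "T = thr (dep (DiaB \<phi>))"
  have th: "2*t \<le> T" "1 \<le> t" "T \<le> n" "t \<le> n" using DiaB.prems thr_Suc thr_ge1 unfolding t_def T_def by auto
  have dir: "csem n (DiaB \<phi>) b" if hyp: "cvalid n a" "cvalid n b" "crel T a b" and that4: "csem n (DiaB \<phi>) a" for a b
  proof -
    obtain i where i: "1 \<le> i" "i < cl a" "csem n \<phi> (cpre n a i)" using that4 by auto
    obtain i' where i': "1 \<le> i'" "i' < cl b" "crel t (cpre n a i) (cpre n b i')"
      using cfB[OF hyp th(1-3) i(1-2)] by blast
    have "csem n \<phi> (cpre n b i')"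
      using DiaB.IH[of "cpre n a i" "cpre n b i'"] i i' th hyp H6
      unfolding t_def by (meson less_imp_le)
    then show ?thesis using i' by auto
  qed
  show ?case using dir DiaB.prems crel_sym unfolding T_def by metis
next
  case (DiaE \<phi>)
  define t where "t = thr (dep \<phi>)"
  define T where "T = thr (dep (DiaE \<phi>))"
  have th: "2*t \<le> T" "1 \<le> t" "T \<le> n" "t \<le> n" using DiaE.prems thr_Suc thr_ge1 unfolding t_def T_def by auto
  have dir: "csem n (DiaE \<phi>) b" if hyp: "cvalid n a" "cvalid n b" "crel T a b" and that4: "csem n (DiaE \<phi>) a" for a b
  proof -
    obtain i where i: "1 \<le> i" "i < cl a" "csem n \<phi> (cE a i)" using that4 by auto
    obtain i' where i': "1 \<le> i'" "i' < cl b" "crel t (cE a i) (cE b i')"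
      using cfE[OF hyp th(1-3) i(1-2)] by blast
    have "csem n \<phi> (cE b i')"
      using DiaE.IH[of "cE a i" "cE b i'"] i i' th hyp H4
      unfolding t_def by meson
    then show ?thesis using i' by auto
  qed
  show ?case using dir DiaE.prems crel_sym unfolding T_def by metis
next
  case (DiaBbar \<phi>)
  define t where "t = thr (dep \<phi>)"
  define T where "T = thr (dep (DiaBbar \<phi>))"
  have th: "2*t \<le> T" "1 \<le> t" "T \<le> n" "t \<le> n" using DiaBbar.prems thr_Suc thr_ge1 unfolding t_def T_def by auto
  have dir: "csem n (DiaBbar \<phi>) b" if hyp: "cvalid n a" "cvalid n b" "crel T a b" and that4: "csem n (DiaBbar \<phi>) a" for a b
  proof -
    obtain \<sigma> where s: "valid n \<sigma>" "cl a < tlen \<sigma>" "prefixtype n \<sigma> (cl a) = c3 a" "csem n \<phi> (cext a \<sigma>)"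
      using that4 unfolding csem.simps by blast
    obtain \<sigma>' where s': "valid n \<sigma>'" "cl b < tlen \<sigma>'" "prefixtype n \<sigma>' (cl b) = c3 b" "crel t (cext a \<sigma>) (cext b \<sigma>')"
      using cfBb[OF hyp th(1-3) s(1-3)] by blast
    have cv: "cvalid n (cext a \<sigma>)" "cvalid n (cext b \<sigma>')" using H7a[OF hyp(1) s(1-3)] H7a[OF hyp(2) s'(1-3)] by auto
    have "csem n \<phi> (cext b \<sigma>')" using DiaBbar.IH[of "cext a \<sigma>" "cext b \<sigma>'"] s s' th cv unfolding t_def by blast
    then show ?thesis using s' unfolding csem.simps by blast
  qed
  show ?case using dir DiaBbar.prems crel_sym unfolding T_def by metis
next
  case (DiaEbar \<phi>)
  define t where "t = thr (dep \<phi>)"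
  define T where "T = thr (dep (DiaEbar \<phi>))"
  have th: "2*t \<le> T" "1 \<le> t" "T \<le> n" "t \<le> n" using DiaEbar.prems thr_Suc thr_ge1 unfolding t_def T_def by auto
  have dir: "csem n (DiaEbar \<phi>) b" if hyp: "cvalid n a" "cvalid n b" "crel T a b" and that4: "csem n (DiaEbar \<phi>) a" for a b
  proof -
    obtain j where j: "1 \<le> j" "j \<le> cx a" "csem n \<phi> (cEb a j)" using that4 by auto
    obtain j' where j': "1 \<le> j'" "j' \<le> cx b" "crel t (cEb a j) (cEb b j')"
      using cfEb[OF hyp th(1-3) j(1-2)] by blast
    have "csem n \<phi> (cEb b j')"
      using DiaEbar.IH[of "cEb a j" "cEb b j'"] j j' th hyp H5
      unfolding t_def by meson
    then show ?thesis using j' by auto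
  qed
  show ?case using dir DiaEbar.prems crel_sym unfolding T_def by metis
qed

lemma ct_models_Kn:
  "ct_models (Kn n s0 :: (nat,'ap) kripke) \<phi> = (\<forall>\<tau>. valid n \<tau> \<and> hd (tr n \<tau>) = s0 \<longrightarrow> csem n \<phi> (0, 0, \<tau>))"
proof -
  note f = full0 cx0 cvalid0
  have red: "valid n \<tau> \<Longrightarrow> hd (tr n \<tau>) = s0 \<Longrightarrow>
      st_holds (comp_tree (Kn n s0 :: (nat,'ap) kripke)) (nodes (tr n \<tau>) 0) \<phi> = csem n \<phi> (0, 0, \<tau>)" for \<tau>
    using ct_red[of n "(0,0,\<tau>)" s0 \<phi>] f by simp
  show ?thesis unfolding ct_models_char
  proof
    assume a: "\<forall>\<tau>. initial_trace (Kn n s0 :: (nat,'ap) kripke) \<tau> \<longrightarrow> st_holds (comp_tree (Kn n s0 :: (nat,'ap) kripke)) (nodes \<tau> 0) \<phi>"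
    show "\<forall>\<tau>. valid n \<tau> \<and> hd (tr n \<tau>) = s0 \<longrightarrow> csem n \<phi> (0, 0, \<tau>)"
    proof (intro allI impI)
      fix \<tau> assume t: "valid n \<tau> \<and> hd (tr n \<tau>) = s0"
      have "is_trace (Kn n s0 :: (nat,'ap) kripke) (tr n \<tau>)" using tr_trace t by blast
      then have "initial_trace (Kn n s0 :: (nat,'ap) kripke) (tr n \<tau>)" using t unfolding initial_trace_def by simp
      then show "csem n \<phi> (0, 0, \<tau>)" using a red t by blast
    qed
  next
    assume a: "\<forall>\<tau>. valid n \<tau> \<and> hd (tr n \<tau>) = s0 \<longrightarrow> csem n \<phi> (0, 0, \<tau>)"
    show "\<forall>\<tau>. initial_trace (Kn n s0 :: (nat,'ap) kripke) \<tau> \<longrightarrow> st_holds (comp_tree (Kn n s0 :: (nat,'ap) kripke)) (nodes \<tau> 0) \<phi>"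
    proof (intro allI impI)
      fix \<rho> assume r: "initial_trace (Kn n s0 :: (nat,'ap) kripke) \<rho>"
      then obtain \<tau> where t: "valid n \<tau>" "\<rho> = tr n \<tau>" using trace_tr unfolding initial_trace_def by blast
      then have "hd (tr n \<tau>) = s0" using r unfolding initial_trace_def by simp
      then show "st_holds (comp_tree (Kn n s0 :: (nat,'ap) kripke)) (nodes \<rho> 0) \<phi>" using a t red by blast
    qed
  qed
qed

lemma crel0: "rel T \<tau> \<tau>' \<Longrightarrow> crel T (0, 0, \<tau>) (0, 0, \<tau>')" by simp

lemma ct_same:
  assumes n: "n = 2 * thr (dep \<phi>)"
  shows "ct_models (Kn n 0 :: (nat,'ap) kripke) \<phi> = ct_models (Kn n 1 :: (nat,'ap) kripke) \<phi>"
proof -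
  define T where "T = thr (dep \<phi>)"
  have T: "1 \<le> T" "2 * T \<le> n" "T \<le> n" using thr_ge1 n unfolding T_def by auto
  have cv: "valid n \<tau> \<Longrightarrow> cvalid n (0, 0, \<tau>)" for \<tau> by (cases \<tau>) auto
  show ?thesis unfolding ct_models_Kn
  proof
    assume a: "\<forall>\<tau>. valid n \<tau> \<and> hd (tr n \<tau>) = 0 \<longrightarrow> csem n \<phi> (0, 0, \<tau>)"
    show "\<forall>\<tau>. valid n \<tau> \<and> hd (tr n \<tau>) = 1 \<longrightarrow> csem n \<phi> (0, 0, \<tau>)"
    proof (intro allI impI)
      fix \<tau> assume t: "valid n \<tau> \<and> hd (tr n \<tau>) = 1"
      obtain \<tau>' where t': "valid n \<tau>'" "hd (tr n \<tau>') = 0" "rel T \<tau> \<tau>'" using match10[OF T(1,2)] t by blast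
      then show "csem n \<phi> (0, 0, \<tau>)" using ct_EF[of \<phi> n "(0,0,\<tau>)" "(0,0,\<tau>')"] a t T cv crel0 unfolding T_def by blast
    qed
  next
    assume a: "\<forall>\<tau>. valid n \<tau> \<and> hd (tr n \<tau>) = 1 \<longrightarrow> csem n \<phi> (0, 0, \<tau>)"
    show "\<forall>\<tau>. valid n \<tau> \<and> hd (tr n \<tau>) = 0 \<longrightarrow> csem n \<phi> (0, 0, \<tau>)"
    proof (intro allI impI)
      fix \<tau> assume t: "valid n \<tau> \<and> hd (tr n \<tau>) = 0"
      obtain \<tau>' where t': "valid n \<tau>'" "hd (tr n \<tau>') = 1" "rel T \<tau> \<tau>'" using match01[OF T(1,2)] t by blast
      then show "csem n \<phi> (0, 0, \<tau>)" using ct_EF[of \<phi> n "(0,0,\<tau>)" "(0,0,\<tau>')"] a t T cv crel0 unfolding T_def by blast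
    qed
  qed
qed

lemma part_ct:
  "\<exists>\<psi>' :: ('ap::finite) hs. \<not> (\<exists>\<phi>. \<forall>K :: (nat, 'ap) kripke.
            kripke K \<and> finite (states K) \<longrightarrow> (ct_models K \<phi> \<longleftrightarrow> lin_models K \<psi>'))"
proof (intro exI[of _ psi] notI)
  assume "\<exists>\<phi>. \<forall>K :: (nat, 'ap) kripke. kripke K \<and> finite (states K) \<longrightarrow> (ct_models K \<phi> \<longleftrightarrow> lin_models K psi)"
  then obtain \<phi> where h: "\<forall>K :: (nat, 'ap) kripke. kripke K \<and> finite (states K) \<longrightarrow> (ct_models K \<phi> \<longleftrightarrow> lin_models K psi)" by blast
  define n where "n = 2 * thr (dep \<phi>)"
  have "ct_models (Kn n 0 :: (nat,'ap) kripke) \<phi> = lin_models (Kn n 0 :: (nat,'ap) kripke) psi"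
    using h Kn_kripke[of 0 n] by auto
  moreover have "ct_models (Kn n 1 :: (nat,'ap) kripke) \<phi> = lin_models (Kn n 1 :: (nat,'ap) kripke) psi"
    using h Kn_kripke[of 1 n] by auto
  ultimately show False using ct_same[OF n_def] lin0 lin1 by blast
qed

theorem proposition5p11:
  shows "(\<exists>\<psi> :: ('ap::finite) hs. \<not> (\<exists>\<phi>. \<forall>K :: (nat, 'ap) kripke.
            kripke K \<and> finite (states K) \<longrightarrow> (st_models K \<phi> \<longleftrightarrow> lin_models K \<psi>)))
       \<and> (\<exists>\<psi>' :: 'ap hs. \<not> (\<exists>\<phi>. \<forall>K :: (nat, 'ap) kripke.
            kripke K \<and> finite (states K) \<longrightarrow> (ct_models K \<phi> \<longleftrightarrow> lin_models K \<psi>')))"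
  using part_st part_ct by blast

end
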